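(* Let $(X,d,A)$ be a metric pair in which $(X,d)$ is a geodesic space and $A$ is distance minimizing, and let $p\in[1,\infty]$. Then $(\overline{D}_p(X,A),W_p)$ and $(D(X,A),W_p)$ are geodesic spaces.
   Context: A metric on $X$ is a map $d:X\times X\to[0,\infty]$ with $d(x,x)=0$, symmetry and the triangle inequality (infinite distances allowed, $d(x,y)=0$ need not imply $x=y$); a metric pair $(X,d,A)$ is such a space with a closed subset $A$. Write $d(x,A)=\inf_{a\in A}d(x,a)$, $A^\delta=\{x:d(x,A)<\delta\}$. $A$ is distance minimizing if for every $x$ with $d(x,A)<\infty$ there is $a\in A$ with $d(x,a)=d(x,A)$. $\overline{D}(X,A)$ is the set of countable formal sums $\hat\alpha=\sum_{i\in I}x_i$ of points of $X\setminus A$ (repetitions allowed); $D(X,A)$ the finite ones; $0$ the empty sum. A matching of $\hat\alpha=\sum_{i\in I}x_i$, $\hat\beta=\sum_{j\in J}y_j$ is a formal sum $\sum_{k\in K}(x_k,y_{\varphi(k)})+\sum_{i\in I\setminus K}(x_i,z_i)+\sum_{j\in J\setminus\varphi(K)}(w_j,y_j)$ with $K\subset I$, $\varphi$ injective, $z_i,w_j\in A$; its $p$-cost is the $\ell^p$ norm (sup norm if $p=\infty$) of the distances of paired points; $W_p$ is the infimum of $p$-costs. $u_\delta(\alpha)$, $\ell_\delta(\alpha)$ are the restrictions of $\hat\alpha$ to $X\setminus A^\delta$ and to $A^\delta\setminus A$. For $p<\infty$, $\overline{D}_p(X,A)=\{\alpha: |u_\infty(\alpha)|<\infty,\ W_p(\ell_\infty(\alpha),0)<\infty\}$;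 $\overline{D}_\infty(X,A)=\{\alpha:|u_\delta(\alpha)|<\infty\ \forall\delta>0\}$. The length of a path $\gamma:[0,1]\to X$ is $\sup\sum_n d(\gamma(t_{n-1}),\gamma(t_n))$ over partitions of $[0,1]$. A geodesic between $x,y$ with $d(x,y)<\infty$ is a path from $x$ to $y$ of length $d(x,y)$; a geodesic space is one where any two points at finite distance are joined by a geodesic. *)

theory Defs
  imports "HOL-Analysis.Analysis"
begin

text \<open>Extended (possibly infinite, pseudo-) metrics on a type 'a, valued in [0,\<infinity>].\<close>

definition metric_on :: "('a \<Rightarrow> 'a \<Rightarrow> ennreal) \<Rightarrow> bool" where
  "metric_on d \<longleftrightarrow> (\<forall>x. d x x = 0) \<and> (\<forall>x y. d x y = d y x) \<and> (\<forall>x y z. d x z \<le> d x y + d y z)"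

definition setdist_e :: "('a \<Rightarrow> 'a \<Rightarrow> ennreal) \<Rightarrow> 'a \<Rightarrow> 'a set \<Rightarrow> ennreal" where
  "setdist_e d x A = (INF a\<in>A. d x a)"

definition mclosed :: "('a \<Rightarrow> 'a \<Rightarrow> ennreal) \<Rightarrow> 'a set \<Rightarrow> bool" where
  "mclosed d A \<longleftrightarrow> (\<forall>x. (\<forall>e::real. e > 0 \<longrightarrow> (\<exists>a\<in>A. d x a < ennreal e)) \<longrightarrow> x \<in> A)"

definition metric_pair :: "('a \<Rightarrow> 'a \<Rightarrow> ennreal) \<Rightarrow> 'a set \<Rightarrow> bool" where
  "metric_pair d A \<longleftrightarrow> metric_on d \<and> mclosed d A"

definition thick :: "('a \<Rightarrow> 'a \<Rightarrow> ennreal) \<Rightarrow> 'a set \<Rightarrow> ennreal \<Rightarrow> 'a set" where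
  "thick d A \<delta> = {x. setdist_e d x A < \<delta>}"

definition dist_minimizing :: "('a \<Rightarrow> 'a \<Rightarrow> ennreal) \<Rightarrow> 'a set \<Rightarrow> bool" where
  "dist_minimizing d A \<longleftrightarrow>
     (\<forall>x. setdist_e d x A < \<infinity> \<longrightarrow> (\<exists>a\<in>A. d x a = setdist_e d x A))"

definition path_cont :: "('b \<Rightarrow> 'b \<Rightarrow> ennreal) \<Rightarrow> (real \<Rightarrow> 'b) \<Rightarrow> bool" where
  "path_cont D \<gamma> \<longleftrightarrow> (\<forall>t\<in>{0..1}. \<forall>e::real. e > 0 \<longrightarrow>
      (\<exists>\<delta>>0. \<forall>s\<in>{0..1}. \<bar>s - t\<bar> < \<delta> \<longrightarrow> D (\<gamma> s) (\<gamma> t) < ennreal e))"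

definition partitions01 :: "(nat \<times> (nat \<Rightarrow> real)) set" where
  "partitions01 = {(n, t). t 0 = 0 \<and> t n = 1 \<and> (\<forall>k<n. t k \<le> t (Suc k))}"

definition path_length :: "('b \<Rightarrow> 'b \<Rightarrow> ennreal) \<Rightarrow> (real \<Rightarrow> 'b) \<Rightarrow> ennreal" where
  "path_length D \<gamma> = (SUP P\<in>partitions01.
      (\<Sum>k\<in>{1..fst P}. D (\<gamma> (snd P (k - 1))) (\<gamma> (snd P k))))"

definition geodesic_space :: "'b set \<Rightarrow> ('b \<Rightarrow> 'b \<Rightarrow> ennreal) \<Rightarrow> bool" where
  "geodesic_space S D \<longleftrightarrow> (\<forall>x\<in>S. \<forall>y\<in>S. D x y < \<infinity> \<longrightarrow>
      (\<exists>\<gamma>. \<gamma> ` {0..1} \<subseteq> S \<and> \<gamma> 0 = x \<and> \<gamma> 1 = y \<and> path_cont D \<gamma> \<and>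
           path_length D \<gamma> = D x y))"

text \<open>Formal sums: a countable formal sum is an indexed family (I, x) with I \<subseteq> nat
  (values of x outside I are irrelevant).\<close>

type_synonym 'a fsum = "nat set \<times> (nat \<Rightarrow> 'a)"

definition fsums :: "'a set \<Rightarrow> 'a fsum set" where
  "fsums A = {(I, x). \<forall>i\<in>I. x i \<notin> A}"

definition fzero :: "'a fsum" where
  "fzero = ({}, \<lambda>_. undefined)"

definition Dfin :: "'a set \<Rightarrow> 'a fsum set" where
  "Dfin A = {\<alpha> \<in> fsums A. finite (fst \<alpha>)}"

definition esum :: "('b \<Rightarrow> ennreal) \<Rightarrow> 'b set \<Rightarrow> ennreal" where
  "esum f S = (SUP F\<in>{F. finite F \<and> F \<subseteq> S}. sum f F)"

definition enn_powr :: "ennreal \<Rightarrow> real \<Rightarrow> ennreal" where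
  "enn_powr x q = (if x = \<infinity> then \<infinity> else ennreal (enn2real x powr q))"

definition is_matching :: "'a set \<Rightarrow> 'a fsum \<Rightarrow> 'a fsum
    \<Rightarrow> nat set \<times> (nat \<Rightarrow> nat) \<times> (nat \<Rightarrow> 'a) \<times> (nat \<Rightarrow> 'a) \<Rightarrow> bool" where
  "is_matching A \<alpha> \<beta> m \<longleftrightarrow> (case (\<alpha>, \<beta>, m) of ((I, x), (J, y), (K, \<phi>, z, w)) \<Rightarrow>
      K \<subseteq> I \<and> inj_on \<phi> K \<and> \<phi> ` K \<subseteq> J \<and> (\<forall>i\<in>I - K. z i \<in> A) \<and> (\<forall>j\<in>J - \<phi> ` K. w j \<in> A))"

definition pcost :: "('a \<Rightarrow> 'a \<Rightarrow> ennreal) \<Rightarrow> ereal \<Rightarrow> 'a fsum \<Rightarrow> 'a fsum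
    \<Rightarrow> nat set \<times> (nat \<Rightarrow> nat) \<times> (nat \<Rightarrow> 'a) \<times> (nat \<Rightarrow> 'a) \<Rightarrow> ennreal" where
  "pcost d p \<alpha> \<beta> m = (case (\<alpha>, \<beta>, m) of ((I, x), (J, y), (K, \<phi>, z, w)) \<Rightarrow>
     (if p = \<infinity> then
        max (SUP k\<in>K. d (x k) (y (\<phi> k)))
          (max (SUP i\<in>I - K. d (x i) (z i)) (SUP j\<in>J - \<phi> ` K. d (w j) (y j)))
      else
        enn_powr
          (esum (\<lambda>k. enn_powr (d (x k) (y (\<phi> k))) (real_of_ereal p)) K
           + esum (\<lambda>i. enn_powr (d (x i) (z i)) (real_of_ereal p)) (I - K)
           + esum (\<lambda>j. enn_powr (d (w j) (y j)) (real_of_ereal p)) (J - \<phi> ` K))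
          (1 / real_of_ereal p)))"

definition Wp :: "('a \<Rightarrow> 'a \<Rightarrow> ennreal) \<Rightarrow> 'a set \<Rightarrow> ereal \<Rightarrow> 'a fsum \<Rightarrow> 'a fsum \<Rightarrow> ennreal" where
  "Wp d A p \<alpha> \<beta> = (INF m\<in>{m. is_matching A \<alpha> \<beta> m}. pcost d p \<alpha> \<beta> m)"

definition u_part :: "('a \<Rightarrow> 'a \<Rightarrow> ennreal) \<Rightarrow> 'a set \<Rightarrow> ennreal \<Rightarrow> 'a fsum \<Rightarrow> 'a fsum" where
  "u_part d A \<delta> \<alpha> = ({i\<in>fst \<alpha>. snd \<alpha> i \<notin> thick d A \<delta>}, snd \<alpha>)"

definition l_part :: "('a \<Rightarrow> 'a \<Rightarrow> ennreal) \<Rightarrow> 'a set \<Rightarrow> ennreal \<Rightarrow> 'a fsum \<Rightarrow> 'a fsum" where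
  "l_part d A \<delta> \<alpha> = ({i\<in>fst \<alpha>. snd \<alpha> i \<in> thick d A \<delta> - A}, snd \<alpha>)"

definition Dbar :: "('a \<Rightarrow> 'a \<Rightarrow> ennreal) \<Rightarrow> 'a set \<Rightarrow> ereal \<Rightarrow> 'a fsum set" where
  "Dbar d A p = (if p = \<infinity> then
       {\<alpha>\<in>fsums A. \<forall>\<delta>::ennreal. \<delta> > 0 \<longrightarrow> finite (fst (u_part d A \<delta> \<alpha>))}
     else
       {\<alpha>\<in>fsums A. finite (fst (u_part d A \<infinity> \<alpha>)) \<and> Wp d A p (l_part d A \<infinity> \<alpha>) fzero < \<infinity>})"

end

theory Submission
  imports Defs "HOL-Library.Diagonal_Subsequence"
begin

lemma metric_onD:
  assumes "metric_on d"
  shows "d x x = 0" "d x y = d y x" "d x z \<le> d x y + d y z"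
  using assms unfolding metric_on_def by auto

lemma sd_le: "a \<in> A \<Longrightarrow> setdist_e d x A \<le> d x a"
  unfolding setdist_e_def by (rule INF_lower)

lemma sd_tri:
  assumes "metric_on d"
  shows "setdist_e d x A \<le> d x y + setdist_e d y A"
proof (cases "A = {}")
  case True then show ?thesis by (simp add: setdist_e_def)
next
  case False
  have e: "d x y + setdist_e d y A = (INF a\<in>A. d x y + d y a)"
    unfolding setdist_e_def
    using continuous_at_Inf_mono[of "\<lambda>z. d x y + z" "(d y) ` A"] False
    using continuous_add[of "at_right (Inf ((d y) ` A))" "\<lambda>z. d x y" "\<lambda>z. z"]
    by (auto simp: mono_def image_comp add_left_mono)
  have "setdist_e d x A \<le> (INF a\<in>A. d x y + d y a)"
    unfolding setdist_e_def
    by (intro INF_mono) (use metric_onD(3)[OF assms] in blast)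
  then show ?thesis using e by simp
qed

lemma sd_in: "a \<in> A \<Longrightarrow> setdist_e d a A = 0" if "metric_on d"
  using sd_le[of a A d a] metric_onD(1)[OF that] by simp

lemma sd_pos:
  assumes "mclosed d A" "x \<notin> A"
  shows "setdist_e d x A > 0"
proof (rule ccontr)
  assume "\<not> setdist_e d x A > 0"
  then have z: "setdist_e d x A = 0" by simp
  have "\<exists>a\<in>A. d x a < ennreal e" if "e > 0" for e :: real
  proof -
    have "(INF a\<in>A. d x a) < ennreal e" using z that by (simp add: setdist_e_def)
    then show ?thesis by (simp add: INF_less_iff)
  qed
  then have "x \<in> A" using assms(1) unfolding mclosed_def by blast
  then show False using assms(2) by simp
qed

lemma sd_nearest:
  assumes "dist_minimizing d A" "setdist_e d x A < \<infinity>"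
  shows "\<exists>a\<in>A. d x a = setdist_e d x A"
  using assms unfolding dist_minimizing_def by blast

lemma ep_top_iff: "q \<ge> 0 \<Longrightarrow> enn_powr x q = \<infinity> \<longleftrightarrow> x = \<infinity>"
  unfolding enn_powr_def by auto

lemma ep_zero[simp]: "enn_powr 0 q = 0"
  unfolding enn_powr_def by simp

lemma ep_mono:
  assumes "x \<le> y" "q \<ge> 0"
  shows "enn_powr x q \<le> enn_powr y q"
proof (cases "y = \<infinity>")
  case True then show ?thesis by (simp add: enn_powr_def)
next
  case False
  then have "x \<noteq> \<infinity>" using assms(1) top.extremum_unique by auto
  then show ?thesis using False assms
    by (auto simp: enn_powr_def enn2real_mono top.not_eq_extremum intro!: ennreal_leI powr_mono2)
qed

lemma ep_inv:
  assumes "q > 0"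
  shows "enn_powr (enn_powr x q) (1 / q) = x"
proof (cases "x = \<infinity>")
  case True then show ?thesis by (simp add: enn_powr_def)
next
  case False
  have "(enn2real x powr q) powr (1/q) = enn2real x"
    using assms by (simp add: powr_powr)
  then show ?thesis using False assms
    by (simp add: enn_powr_def top.not_eq_extremum)
qed

lemma ep_inv':
  assumes "q > 0"
  shows "enn_powr (enn_powr x (1/q)) q = x"
  using ep_inv[of "1/q" x] assms by simp

lemma ep_le_iff:
  assumes "q > 0"
  shows "enn_powr x q \<le> enn_powr y q \<longleftrightarrow> x \<le> y"
  using ep_mono[of x y q] ep_mono[of "enn_powr x q" "enn_powr y q" "1/q"] ep_inv[OF assms] assms
  by auto

lemma ep_mult:
  assumes "c \<ge> 0" "q > 0"
  shows "enn_powr (ennreal c * x) q = ennreal (c powr q) * enn_powr x q"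
proof (cases "x = \<infinity>")
  case True
  then show ?thesis using assms
    by (cases "c = 0") (auto simp: enn_powr_def ennreal_mult_top)
next
  case False
  then have "ennreal c * x \<noteq> \<infinity>" by (simp add: ennreal_mult_eq_top_iff)
  moreover have "enn2real (ennreal c * x) = c * enn2real x" using assms
    by (simp add: enn2real_mult)
  ultimately show ?thesis using False assms
    by (simp add: enn_powr_def powr_mult ennreal_mult'[symmetric] enn2real_nonneg)
qed

lemma summ_enn[simp]: "(f::_ \<Rightarrow> ennreal) summable_on S"
  by (simp add: nonneg_summable_on_complete)

lemma infsum_cmult_enn: "infsum (\<lambda>k. c * f k) S = (c::ennreal) * infsum f S"
  by (simp add: nonneg_infsum_complete sum_distrib_left SUP_mult_left_ennreal)

lemma infsum_subset_enn: "S \<subseteq> S' \<Longrightarrow> infsum (f::_\<Rightarrow>ennreal) S \<le> infsum f S'"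
  by (simp add: nonneg_infsum_complete) (intro SUP_subset_mono, auto)


lemma esum_infsum: "esum f S = infsum f S"
  unfolding esum_def by (rule nonneg_infsum_complete[symmetric]) simp

definition Np :: "ereal \<Rightarrow> ('i \<Rightarrow> ennreal) \<Rightarrow> 'i set \<Rightarrow> ennreal" where
  "Np p f S = (if p = \<infinity> then (SUP k\<in>S. f k)
     else enn_powr (infsum (\<lambda>k. enn_powr (f k) (real_of_ereal p)) S) (1 / real_of_ereal p))"

lemma realp_pos: "1 \<le> p \<Longrightarrow> p \<noteq> \<infinity> \<Longrightarrow> real_of_ereal p \<ge> 1"
  by (cases p) auto

lemma N_mono:
  assumes "1 \<le> p" "\<And>k. k \<in> S \<Longrightarrow> f k \<le> g k"
  shows "Np p f S \<le> Np p g S"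
proof (cases "p = \<infinity>")
  case True then show ?thesis using assms by (auto simp: Np_def intro: SUP_mono)
next
  case False
  then have q: "real_of_ereal p \<ge> 1" using realp_pos assms by auto
  have "infsum (\<lambda>k. enn_powr (f k) (real_of_ereal p)) S \<le> infsum (\<lambda>k. enn_powr (g k) (real_of_ereal p)) S"
    using assms q by (intro infsum_mono) (auto intro: ep_mono)
  then show ?thesis using False q by (auto simp: Np_def intro: ep_mono)
qed

lemma N_subset:
  assumes "1 \<le> p" "S \<subseteq> S'"
  shows "Np p f S \<le> Np p f S'"
proof (cases "p = \<infinity>")
  case True then show ?thesis using assms by (auto simp: Np_def intro: SUP_subset_mono)
next
  case False
  then have q: "real_of_ereal p \<ge> 1" using realp_pos assms by auto
  have "infsum (\<lambda>k. enn_powr (f k) (real_of_ereal p)) S \<le> infsum (\<lambda>k. enn_powr (f k) (real_of_ereal p)) S'"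
    using assms by (intro infsum_subset_enn) auto
  then show ?thesis using False q by (auto simp: Np_def intro: ep_mono)
qed

lemma N_reindex:
  assumes "inj_on g S"
  shows "Np p f (g ` S) = Np p (f \<circ> g) S"
  using assms by (simp add: Np_def infsum_reindex image_image o_def)

lemma N_cong:
  assumes "\<And>k. k \<in> S \<Longrightarrow> f k = g k"
  shows "Np p f S = Np p g S"
  using assms by (simp add: Np_def cong: infsum_cong SUP_cong)

lemma N_ge:
  assumes "1 \<le> p" "k \<in> S"
  shows "f k \<le> Np p f S"
proof -
  have "Np p f {k} \<le> Np p f S" by (intro N_subset) (use assms in auto)
  moreover have "Np p f {k} = f k"
  proof (cases "p = \<infinity>")
    case True then show ?thesis by (simp add: Np_def)
  next
    case False
    then have q: "real_of_ereal p \<ge> 1" using realp_pos assms by auto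
    then show ?thesis using False by (simp add: Np_def ep_inv)
  qed
  ultimately show ?thesis by simp
qed

lemma N_scale:
  assumes "1 \<le> p" "c \<ge> 0"
  shows "Np p (\<lambda>k. ennreal c * f k) S = ennreal c * Np p f S"
proof (cases "p = \<infinity>")
  case True then show ?thesis
    by (simp add: Np_def SUP_mult_left_ennreal)
next
  case False
  then have q: "real_of_ereal p \<ge> 1" using realp_pos assms by auto
  define q' where "q' = real_of_ereal p"
  have "infsum (\<lambda>k. enn_powr (ennreal c * f k) q') S = ennreal (c powr q') * infsum (\<lambda>k. enn_powr (f k) q') S"
    using q assms by (simp add: ep_mult q'_def infsum_cmult_enn)
  then have "Np p (\<lambda>k. ennreal c * f k) S = enn_powr (ennreal (c powr q') * infsum (\<lambda>k. enn_powr (f k) q') S) (1/q')"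
    using False by (simp add: Np_def q'_def)
  also have "\<dots> = ennreal ((c powr q') powr (1/q')) * enn_powr (infsum (\<lambda>k. enn_powr (f k) q') S) (1/q')"
    using q assms by (simp add: ep_mult q'_def)
  also have "(c powr q') powr (1/q') = c" using q assms by (simp add: powr_powr q'_def)
  finally show ?thesis using False by (simp add: Np_def q'_def)
qed

lemma N_zero_out:
  assumes "1 \<le> p" "S' \<subseteq> S" "\<And>k. k \<in> S - S' \<Longrightarrow> f k = 0"
  shows "Np p f S = Np p f S'"
proof (cases "p = \<infinity>")
  case True
  have "(SUP k\<in>S. f k) \<le> (SUP k\<in>S'. f k)"
    by (rule SUP_least) (metis DiffI SUP_upper assms(3) zero_le)
  moreover have "(SUP k\<in>S'. f k) \<le> (SUP k\<in>S. f k)" using assms(2) by (rule SUP_subset_mono) simp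
  ultimately show ?thesis using True by (simp add: Np_def)
next
  case False
  then have q: "real_of_ereal p \<ge> 1" using realp_pos assms by auto
  have "infsum (\<lambda>k. enn_powr (f k) (real_of_ereal p)) S = infsum (\<lambda>k. enn_powr (f k) (real_of_ereal p)) S'"
    using assms by (intro infsum_cong_neutral) auto
  then show ?thesis using False by (simp add: Np_def)
qed

lemma N_finite_approx:
  assumes "1 \<le> p" "\<And>F. finite F \<Longrightarrow> F \<subseteq> S \<Longrightarrow> Np p f F \<le> c"
  shows "Np p f S \<le> c"
proof (cases "p = \<infinity>")
  case True
  show ?thesis using True
  proof (simp add: Np_def, intro SUP_least)
    fix k assume "k \<in> S"
    then show "f k \<le> c" using N_ge[OF assms(1), of k "{k}" f] assms(2)[of "{k}"] by auto
  qed
next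
  case False
  then have q: "real_of_ereal p \<ge> 1" using realp_pos assms by auto
  define q' where "q' = real_of_ereal p"
  have "sum (\<lambda>k. enn_powr (f k) q') F \<le> enn_powr c q'" if "finite F" "F \<subseteq> S" for F
  proof -
    have "enn_powr (sum (\<lambda>k. enn_powr (f k) q') F) (1/q') \<le> c"
      using assms(2)[OF that] False that by (simp add: Np_def q'_def)
    then have "enn_powr (enn_powr (sum (\<lambda>k. enn_powr (f k) q') F) (1/q')) q' \<le> enn_powr c q'"
      using q by (intro ep_mono) (auto simp: q'_def)
    then show ?thesis using q by (simp add: ep_inv' q'_def)
  qed
  then have "infsum (\<lambda>k. enn_powr (f k) q') S \<le> enn_powr c q'"
    by (subst nonneg_infsum_complete) (auto intro: SUP_least)
  then have "enn_powr (infsum (\<lambda>k. enn_powr (f k) q') S) (1/q') \<le> enn_powr (enn_powr c q') (1/q')"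
    using q by (intro ep_mono) (auto simp: q'_def)
  then show ?thesis using q False by (simp add: Np_def ep_inv q'_def)
qed

lemma pcost_N:
  assumes "K \<subseteq> I"
  shows "pcost d p (I,x) (J,y) (K,\<phi>,z,w) = Np p (\<lambda>\<pi>. case \<pi> of Inl i \<Rightarrow> (if i\<in>K then d (x i) (y (\<phi> i)) else d (x i) (z i)) | Inr j \<Rightarrow> d (w j) (y j)) (Inl ` I \<union> Inr ` (J - \<phi> ` K))"
proof -
  define F where "F = (\<lambda>\<pi>. case \<pi> of Inl i \<Rightarrow> (if i\<in>K then d (x i) (y (\<phi> i)) else d (x i) (z i)) | Inr j \<Rightarrow> d (w j) (y j))"
  have U: "Inl ` I \<union> Inr ` (J - \<phi> ` K) = (Inl ` K \<union> Inl ` (I - K)) \<union> Inr ` (J - \<phi> ` K)"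
    using assms by auto
  show ?thesis
  proof (cases "p = \<infinity>")
    case True
    have "Np p F (Inl ` I \<union> Inr ` (J - \<phi> ` K)) = sup (sup (SUP k\<in>K. d (x k) (y (\<phi> k))) (SUP i\<in>I-K. d (x i) (z i))) (SUP j\<in>J - \<phi> ` K. d (w j) (y j))"
    proof -
      have 1: "(SUP k\<in>Inl ` K. F k) = (SUP k\<in>K. d (x k) (y (\<phi> k)))"
        by (simp only: image_image) (simp add: F_def cong: SUP_cong)
      have 2: "(SUP k\<in>Inl ` (I-K). F k) = (SUP i\<in>I-K. d (x i) (z i))"
        by (simp only: image_image) (rule SUP_cong, auto simp: F_def)
      have 3: "(SUP k\<in>Inr ` (J - \<phi> ` K). F k) = (SUP j\<in>J - \<phi> ` K. d (w j) (y j))"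
        by (simp only: image_image) (simp add: F_def cong: SUP_cong)
      show ?thesis unfolding U using True 1 2 3 by (simp add: Np_def SUP_union)
    qed
    then show ?thesis using True by (simp add: pcost_def F_def[symmetric] sup_max max.assoc)
  next
    case False
    define q where "q = real_of_ereal p"
    have "infsum (\<lambda>k. enn_powr (F k) q) (Inl ` I \<union> Inr ` (J - \<phi> ` K)) =
      infsum (\<lambda>k. enn_powr (F k) q) (Inl ` K) + infsum (\<lambda>k. enn_powr (F k) q) (Inl ` (I-K)) + infsum (\<lambda>k. enn_powr (F k) q) (Inr ` (J - \<phi> ` K))"
      unfolding U by (subst infsum_Un_disjoint, simp, simp, blast)+ simp
    also have "\<dots> = esum (\<lambda>k. enn_powr (d (x k) (y (\<phi> k))) q) K
           + esum (\<lambda>i. enn_powr (d (x i) (z i)) q) (I - K)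
           + esum (\<lambda>j. enn_powr (d (w j) (y j)) q) (J - \<phi> ` K)"
    proof -
      have 1: "infsum (\<lambda>k. enn_powr (F k) q) (Inl ` K) = esum (\<lambda>k. enn_powr (d (x k) (y (\<phi> k))) q) K"
        by (simp add: esum_infsum infsum_reindex o_def F_def cong: infsum_cong)
      have 2: "infsum (\<lambda>k. enn_powr (F k) q) (Inl ` (I-K)) = esum (\<lambda>i. enn_powr (d (x i) (z i)) q) (I - K)"
        by (simp add: esum_infsum infsum_reindex o_def F_def) (rule infsum_cong, simp)
      have 3: "infsum (\<lambda>k. enn_powr (F k) q) (Inr ` (J - \<phi> ` K)) = esum (\<lambda>j. enn_powr (d (w j) (y j)) q) (J - \<phi> ` K)"
        by (simp add: esum_infsum infsum_reindex o_def F_def cong: infsum_cong)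
      show ?thesis using 1 2 3 by simp
    qed
    finally show ?thesis using False
      by (simp add: pcost_def Np_def q_def F_def[symmetric])
  qed
qed

lemma Wp_le_pcost: "is_matching A \<alpha> \<beta> m \<Longrightarrow> Wp d A p \<alpha> \<beta> \<le> pcost d p \<alpha> \<beta> m"
  unfolding Wp_def by (rule INF_lower) simp

definition rep :: "'a set \<Rightarrow> 'i set \<Rightarrow> 'a fsum \<Rightarrow> ('i \<Rightarrow> 'a) \<Rightarrow> ('i \<Rightarrow> nat option) \<Rightarrow> bool" where
  "rep A T \<alpha> u e \<longleftrightarrow> (\<forall>\<tau>\<in>T. (e \<tau> = None \<longrightarrow> u \<tau> \<in> A) \<and> (\<forall>n. e \<tau> = Some n \<longrightarrow> n \<in> fst \<alpha> \<and> snd \<alpha> n = u \<tau>))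
     \<and> (\<forall>\<tau>\<in>T. \<forall>\<tau>'\<in>T. \<forall>n. e \<tau> = Some n \<longrightarrow> e \<tau>' = Some n \<longrightarrow> \<tau> = \<tau>')
     \<and> (\<forall>n\<in>fst \<alpha>. \<exists>\<tau>\<in>T. e \<tau> = Some n)"

lemma key:
  assumes p: "1 \<le> p" and r1: "rep A T (I,x) u e1" and r2: "rep A T (J,y) v e2"
  shows "Wp d A p (I,x) (J,y) \<le> Np p (\<lambda>\<tau>. d (u \<tau>) (v \<tau>)) T"
proof -
  define \<iota>1 where "\<iota>1 n = (SOME \<tau>. \<tau> \<in> T \<and> e1 \<tau> = Some n)" for n
  define \<iota>2 where "\<iota>2 n = (SOME \<tau>. \<tau> \<in> T \<and> e2 \<tau> = Some n)" for n
  have i1: "\<iota>1 n \<in> T \<and> e1 (\<iota>1 n) = Some n" if "n \<in> I" for n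
    unfolding \<iota>1_def by (rule someI_ex) (use r1 that in \<open>auto simp: rep_def\<close>)
  have i2: "\<iota>2 n \<in> T \<and> e2 (\<iota>2 n) = Some n" if "n \<in> J" for n
    unfolding \<iota>2_def by (rule someI_ex) (use r2 that in \<open>auto simp: rep_def\<close>)
  have u1: "\<iota>1 n = \<tau>" if "\<tau> \<in> T" "e1 \<tau> = Some n" for \<tau> n
  proof -
    have "n \<in> I" using r1 that by (auto simp: rep_def)
    then show ?thesis using i1[of n] r1 that unfolding rep_def by blast
  qed
  have u2: "\<iota>2 n = \<tau>" if "\<tau> \<in> T" "e2 \<tau> = Some n" for \<tau> n
  proof -
    have "n \<in> J" using r2 that by (auto simp: rep_def)
    then show ?thesis using i2[of n] r2 that unfolding rep_def by blast
  qed
  have x1: "x n = u (\<iota>1 n)" if "n \<in> I" for n using i1[OF that] r1 by (auto simp: rep_def)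
  have y2: "y n = v (\<iota>2 n)" if "n \<in> J" for n using i2[OF that] r2 by (auto simp: rep_def)
  define K where "K = {n\<in>I. e2 (\<iota>1 n) \<noteq> None}"
  define \<phi> where "\<phi> n = the (e2 (\<iota>1 n))" for n
  define z where "z n = v (\<iota>1 n)" for n
  define w where "w n = u (\<iota>2 n)" for n
  have e2K: "e2 (\<iota>1 n) = Some (\<phi> n)" if "n \<in> K" for n using that by (auto simp: K_def \<phi>_def)
  have phiJ: "\<phi> n \<in> J" "v (\<iota>1 n) = y (\<phi> n)" if "n \<in> K" for n
    using e2K[OF that] i1[of n] that r2 by (auto simp: rep_def K_def)
  have injK: "inj_on \<phi> K"
  proof (rule inj_onI)
    fix n n' assume "n \<in> K" "n' \<in> K" "\<phi> n = \<phi> n'"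
    then have "\<iota>1 n = \<iota>1 n'" using e2K i1 r2 unfolding rep_def K_def by (metis (no_types, lifting) mem_Collect_eq)
    then show "n = n'" using i1 \<open>n \<in> K\<close> \<open>n' \<in> K\<close> by (metis (no_types, lifting) K_def mem_Collect_eq option.inject)
  qed
  have e1R: "e1 (\<iota>2 m) = None" if "m \<in> J - \<phi> ` K" for m
  proof (rule ccontr)
    assume "e1 (\<iota>2 m) \<noteq> None"
    then obtain n where n: "e1 (\<iota>2 m) = Some n" by auto
    have m: "m \<in> J" using that by auto
    have "\<iota>1 n = \<iota>2 m" using u1[OF _ n] i2[OF m] by auto
    moreover have "n \<in> I" using r1 n i2[OF m] by (auto simp: rep_def)
    ultimately have "n \<in> K" "\<phi> n = m" using i2[OF m] by (auto simp: K_def \<phi>_def)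
    then show False using that by auto
  qed
  have match: "is_matching A (I,x) (J,y) (K,\<phi>,z,w)"
    unfolding is_matching_def
  proof (simp, intro conjI ballI)
    show "K \<subseteq> I" by (auto simp: K_def)
    show "inj_on \<phi> K" by (rule injK)
    show "\<phi> ` K \<subseteq> J" using phiJ by auto
  next
    fix i assume "i \<in> I - K"
    then show "z i \<in> A" using i1[of i] r2 by (auto simp: K_def z_def rep_def)
  next
    fix j assume "j \<in> J - \<phi> ` K"
    then show "w j \<in> A" using e1R[of j] i2[of j] r1 by (auto simp: w_def rep_def)
  qed
  define \<rho> where "\<rho> \<pi> = (case \<pi> of Inl n \<Rightarrow> \<iota>1 n | Inr m \<Rightarrow> \<iota>2 m)" for \<pi>
  define S where "S = Inl ` I \<union> Inr ` (J - \<phi> ` K)"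
  define D where "D = (\<lambda>\<tau>. d (u \<tau>) (v \<tau>))"
  have inj: "inj_on \<rho> S"
  proof (rule inj_onI)
    fix a b assume a: "a \<in> S" and b: "b \<in> S" and ab: "\<rho> a = \<rho> b"
    show "a = b"
    proof (cases a)
      case (Inl n)
      then have n: "n \<in> I" using a by (auto simp: S_def)
      show ?thesis
      proof (cases b)
        case (Inl n')
        then have "n' \<in> I" using b by (auto simp: S_def)
        then show ?thesis using ab i1 n \<open>a = Inl n\<close> Inl by (metis \<rho>_def old.sum.simps(5) option.inject)
      next
        case (Inr m)
        then have "m \<in> J - \<phi> ` K" using b by (auto simp: S_def)
        then have "e1 (\<iota>2 m) = None" by (rule e1R)
        moreover have "\<iota>2 m = \<iota>1 n" using ab \<open>a = Inl n\<close> Inr by (simp add: \<rho>_def)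
        ultimately show ?thesis using i1[OF n] by simp
      qed
    next
      case (Inr m)
      then have m: "m \<in> J - \<phi> ` K" using a by (auto simp: S_def)
      show ?thesis
      proof (cases b)
        case (Inl n)
        then have n: "n \<in> I" using b by (auto simp: S_def)
        have "e1 (\<iota>2 m) = None" using m by (rule e1R)
        moreover have "\<iota>2 m = \<iota>1 n" using ab \<open>a = Inr m\<close> Inl by (simp add: \<rho>_def)
        ultimately show ?thesis using i1[OF n] by simp
      next
        case (Inr m')
        then have "m' \<in> J" using b by (auto simp: S_def)
        then show ?thesis using ab i2 m \<open>a = Inr m\<close> Inr by (metis DiffD1 \<rho>_def old.sum.simps(6) option.inject)
      qed
    qed
  qed
  have rhoT: "\<rho> ` S \<subseteq> T" using i1 i2 by (auto simp: S_def \<rho>_def)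
  have "Wp d A p (I,x) (J,y) \<le> pcost d p (I,x) (J,y) (K,\<phi>,z,w)" by (rule Wp_le_pcost[OF match])
  also have "\<dots> = Np p (\<lambda>\<pi>. case \<pi> of Inl i \<Rightarrow> (if i\<in>K then d (x i) (y (\<phi> i)) else d (x i) (z i)) | Inr j \<Rightarrow> d (w j) (y j)) S"
    unfolding S_def by (rule pcost_N) (auto simp: K_def)
  also have "\<dots> = Np p (D \<circ> \<rho>) S"
  proof (rule N_cong)
    fix \<pi> assume "\<pi> \<in> S"
    then show "(case \<pi> of Inl i \<Rightarrow> (if i\<in>K then d (x i) (y (\<phi> i)) else d (x i) (z i)) | Inr j \<Rightarrow> d (w j) (y j)) = (D \<circ> \<rho>) \<pi>"
      using x1 y2 phiJ by (auto simp: S_def D_def \<rho>_def z_def w_def K_def)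
  qed
  also have "\<dots> = Np p D (\<rho> ` S)" by (rule N_reindex[symmetric, OF inj])
  also have "\<dots> \<le> Np p D T" by (rule N_subset[OF p rhoT])
  finally show ?thesis unfolding D_def .
qed

lemma enn3: "(a::ennreal) + b + c \<le> t \<Longrightarrow> t < \<infinity> \<Longrightarrow> a < \<infinity> \<and> b < \<infinity> \<and> c < \<infinity>"
proof -
  assume h: "a + b + c \<le> t" "t < \<infinity>"
  have "a \<le> a + b + c" "b \<le> a + b + c" "c \<le> a + b + c"
    by (simp_all add: add_increasing add_increasing2)
  then show ?thesis using h by (meson order_le_less_trans)+
qed

lemma geo_points:
  assumes md: "metric_on d" and gs: "geodesic_space UNIV d" and fin: "d x y < \<infinity>"
  shows "\<exists>h. h 0 = x \<and> h 1 = y \<and> (\<forall>s\<in>{0..1}. \<forall>t\<in>{0..1}. d (h s) (h t) = ennreal (\<bar>s - t\<bar> * enn2real (d x y)))"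
proof -
  have "\<exists>\<gamma>. \<gamma> ` {0..1} \<subseteq> UNIV \<and> \<gamma> 0 = x \<and> \<gamma> 1 = y \<and> path_cont d \<gamma> \<and> path_length d \<gamma> = d x y"
    using gs fin unfolding geodesic_space_def by simp
  then obtain g where g0: "g 0 = x" and g1: "g 1 = y" and cont: "path_cont d g" and len: "path_length d g = d x y"
    by auto
  define L where "L = enn2real (d x y)"
  have dL: "d x y = ennreal L" using fin by (simp add: L_def)
  have L0: "L \<ge> 0" by (simp add: L_def)
  have A3: "d x (g s) + d (g s) (g s') + d (g s') y \<le> d x y" if "0 \<le> s" "s \<le> s'" "s' \<le> 1" for s s'
  proof -
    define t where "t k = (if k = 0 then 0 else if k = 1 then s else if k = 2 then s' else (1::real))" for k :: nat
    have P: "(3, t) \<in> partitions01" using that by (auto simp: partitions01_def t_def less_Suc_eq numeral_3_eq_3)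
    have e: "{1..3::nat} = {1,2,3}" by auto
    have "(\<Sum>k\<in>{1..fst (3::nat,t)}. d (g (snd (3::nat,t) (k - 1))) (g (snd (3::nat, t) k))) = d x (g s) + d (g s) (g s') + d (g s') y"
      by (simp only: fst_conv snd_conv e) (simp add: t_def g0 g1 add.assoc)
    moreover have "(\<Sum>k\<in>{1..fst (3::nat,t)}. d (g (snd (3::nat,t) (k - 1))) (g (snd (3::nat, t) k))) \<le> path_length d g"
      unfolding path_length_def by (rule SUP_upper[OF P])
    ultimately show ?thesis using len by simp
  qed
  have fin1: "d x (g s) < \<infinity>" "d (g s) y < \<infinity>" if "0 \<le> s" "s \<le> 1" for s
  proof -
    have "d x (g s) + d (g s) (g s) + d (g s) y \<le> d x y" using A3[of s s] that by simp
    then show "d x (g s) < \<infinity>" "d (g s) y < \<infinity>" using enn3 fin by blast+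
  qed
  have fin2: "d (g s) (g s') < \<infinity>" if "0 \<le> s" "s \<le> s'" "s' \<le> 1" for s s'
    using A3[OF that] fin enn3 by blast
  define \<phi> where "\<phi> s = enn2real (d x (g s))" for s
  have phi0: "\<phi> s \<ge> 0" for s by (simp add: \<phi>_def)
  define Dr where "Dr s t = enn2real (d (g s) (g t))" for s t
  have dphi: "d x (g s) = ennreal (\<phi> s)" "d (g s) y = ennreal (L - \<phi> s)" "\<phi> s \<le> L" if "0 \<le> s" "s \<le> 1" for s
  proof -
    show a: "d x (g s) = ennreal (\<phi> s)" using fin1[OF that] by (simp add: \<phi>_def)
    have le: "d x (g s) + d (g s) y \<le> d x y" using A3[of s s] that metric_onD(1)[OF md] by simp
    have ge: "d x y \<le> d x (g s) + d (g s) y" using metric_onD(3)[OF md] by blast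
    have eq: "d x (g s) + d (g s) y = d x y" using le ge by simp
    define e where "e = enn2real (d (g s) y)"
    have b: "d (g s) y = ennreal e" using fin1[OF that] by (simp add: e_def)
    have "ennreal (\<phi> s) + ennreal e = ennreal L" using eq a b dL by metis
    then have "ennreal (\<phi> s + e) = ennreal L" by (simp add: ennreal_plus[symmetric] phi0 e_def del: ennreal_plus)
    then have sum: "\<phi> s + e = L" using L0 by (subst (asm) ennreal_inj) (auto simp: e_def phi0 add_nonneg_nonneg)
    then show "d (g s) y = ennreal (L - \<phi> s)" using b by (metis add_diff_cancel_left')
    show "\<phi> s \<le> L" using sum enn2real_nonneg[of "d (g s) y"] unfolding e_def by linarith
  qed
  have dDr: "d (g s) (g s') = ennreal (Dr s s')" if "0 \<le> s" "s \<le> s'" "s' \<le> 1" for s s'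
    using fin2[OF that] by (simp add: Dr_def)
  have main: "Dr s s' = \<phi> s' - \<phi> s" if "0 \<le> s" "s \<le> s'" "s' \<le> 1" for s s'
  proof -
    have "ennreal (\<phi> s) + ennreal (Dr s s') + ennreal (L - \<phi> s') \<le> ennreal L"
      using A3[OF that] dphi[of s] dphi[of s'] dDr[OF that] that dL by simp
    moreover have "L - \<phi> s' \<ge> 0" using dphi(3)[of s'] that by simp
    ultimately have le: "\<phi> s + Dr s s' + (L - \<phi> s') \<le> L"
      using L0 phi0 by (simp add: ennreal_plus[symmetric] Dr_def del: ennreal_plus)
    have "d x (g s') \<le> d x (g s) + d (g s) (g s')" using metric_onD(3)[OF md] by blast
    then have "ennreal (\<phi> s') \<le> ennreal (\<phi> s) + ennreal (Dr s s')"
      using dphi[of s] dphi[of s'] dDr[OF that] that by simp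
    then have ge: "\<phi> s' \<le> \<phi> s + Dr s s'"
      by (simp add: Dr_def \<phi>_def ennreal_plus[symmetric] del: ennreal_plus)
    show ?thesis using le ge by linarith
  qed
  have Drsym: "Dr s s' = Dr s' s" for s s' using metric_onD(2)[OF md] by (simp add: Dr_def)
  have Drabs: "Dr s s' = \<bar>\<phi> s' - \<phi> s\<bar>" if "s \<in> {0..1}" "s' \<in> {0..1}" for s s'
  proof (cases "s \<le> s'")
    case True
    have "Dr s s' \<ge> 0" by (simp add: Dr_def)
    then show ?thesis using main[of s s'] that True by simp
  next
    case False
    have "Dr s' s \<ge> 0" by (simp add: Dr_def)
    then show ?thesis using main[of s' s] that Drsym[of s s'] False by simp
  qed
  have contphi: "continuous_on {0..1} \<phi>"
    unfolding continuous_on_iff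
  proof (intro ballI allI impI)
    fix t e assume t: "t \<in> {0..1::real}" and e: "(0::real) < e"
    obtain \<delta> where \<delta>: "\<delta> > 0" "\<forall>s\<in>{0..1}. \<bar>s - t\<bar> < \<delta> \<longrightarrow> d (g s) (g t) < ennreal e"
      using cont t e unfolding path_cont_def by blast
    show "\<exists>\<delta>>0. \<forall>s\<in>{0..1}. dist s t < \<delta> \<longrightarrow> dist (\<phi> s) (\<phi> t) < e"
    proof (intro exI[of _ \<delta>] conjI ballI impI)
      fix s assume s: "s \<in> {0..1::real}" and "dist s t < \<delta>"
      then have "d (g s) (g t) < ennreal e" using \<delta> by (simp add: dist_real_def)
      moreover have "d (g s) (g t) < \<infinity>" using calculation less_trans[OF calculation ennreal_less_top] by simp
      ultimately have "Dr s t < e" unfolding Dr_def using e by (simp add: enn2real_less_iff)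
      then show "dist (\<phi> s) (\<phi> t) < e" using Drabs[OF s t] by (simp add: dist_real_def abs_minus_commute)
    qed (use \<delta> in auto)
  qed
  have phi_0: "\<phi> 0 = 0" using metric_onD(1)[OF md] by (simp add: \<phi>_def g0)
  have phi_1: "\<phi> 1 = L" using g1 by (simp add: \<phi>_def L_def)
  have ex: "\<exists>s. 0 \<le> s \<and> s \<le> 1 \<and> \<phi> s = c * L" if "c \<in> {0..1}" for c
    using IVT'[of \<phi> 0 "c * L" 1] contphi phi_0 phi_1 that L0
    by (auto simp: mult_left_le_one_le mult_nonneg_nonneg)
  define \<sigma> where "\<sigma> c = (if c = 0 then 0 else if c = 1 then 1 else (SOME s. 0 \<le> s \<and> s \<le> 1 \<and> \<phi> s = c * L))" for c :: real
  have sig: "\<sigma> c \<in> {0..1} \<and> \<phi> (\<sigma> c) = c * L" if "c \<in> {0..1}" for c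
  proof (cases "c = 0 \<or> c = 1")
    case True then show ?thesis using phi_0 phi_1 by (auto simp: \<sigma>_def)
  next
    case False
    then show ?thesis unfolding \<sigma>_def using someI_ex[OF ex[OF that]] by auto
  qed
  define h where "h c = g (\<sigma> c)" for c
  show ?thesis
  proof (intro exI[of _ h] conjI ballI)
    show "h 0 = x" by (simp add: h_def \<sigma>_def g0)
    show "h 1 = y" by (simp add: h_def \<sigma>_def g1)
  next
    fix s t :: real assume s: "s \<in> {0..1}" and t: "t \<in> {0..1}"
    have "d (h s) (h t) = ennreal (Dr (\<sigma> s) (\<sigma> t))"
    proof (cases "\<sigma> s \<le> \<sigma> t")
      case True then show ?thesis using fin2[of "\<sigma> s" "\<sigma> t"] sig[OF s] sig[OF t] by (simp add: h_def Dr_def)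
    next
      case False
      then have "d (g (\<sigma> s)) (g (\<sigma> t)) < \<infinity>"
        using fin2[of "\<sigma> t" "\<sigma> s"] sig[OF s] sig[OF t] metric_onD(2)[OF md, of "g (\<sigma> s)" "g (\<sigma> t)"] by simp
      then show ?thesis by (simp add: h_def Dr_def)
    qed
    also have "Dr (\<sigma> s) (\<sigma> t) = \<bar>t * L - s * L\<bar>" using Drabs sig[OF s] sig[OF t] by auto
    also have "\<dots> = \<bar>s - t\<bar> * L" using L0 by (simp add: abs_mult left_diff_distrib[symmetric] abs_minus_commute)
    finally show "d (h s) (h t) = ennreal (\<bar>s - t\<bar> * enn2real (d x y))" by (simp add: L_def)
  qed
qed

definition near :: "('a \<Rightarrow> 'a \<Rightarrow> ennreal) \<Rightarrow> 'a set \<Rightarrow> 'a \<Rightarrow> 'a" where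
  "near d A u = (SOME a. a \<in> A \<and> d u a = setdist_e d u A)"

lemma near:
  assumes "dist_minimizing d A" "setdist_e d u A < \<infinity>"
  shows "near d A u \<in> A \<and> d u (near d A u) = setdist_e d u A"
  unfolding near_def by (rule someI_ex) (use sd_nearest[OF assms] in auto)

lemma N_lt_top_fin:
  assumes "1 \<le> p" "finite S" "\<And>k. k \<in> S \<Longrightarrow> f k < \<infinity>"
  shows "Np p f S < \<infinity>"
proof (cases "p = \<infinity>")
  case True
  have "(SUP k\<in>S. f k) \<le> (\<Sum>k\<in>S. f k)"
    by (intro SUP_least member_le_sum) (auto simp: assms(2))
  moreover have "(\<Sum>k\<in>S. f k) < \<infinity>" using assms by simp
  ultimately show ?thesis using True by (simp add: Np_def)
next
  case False
  then have q: "real_of_ereal p \<ge> 1" using realp_pos assms by auto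
  have "(\<Sum>k\<in>S. enn_powr (f k) (real_of_ereal p)) < \<infinity>"
    using assms q ep_top_iff[of "real_of_ereal p"] by (simp add: less_top[symmetric])
  then show ?thesis using False assms q ep_top_iff[of "1 / real_of_ereal p"]
    by (simp add: Np_def less_top[symmetric])
qed

lemma N_lt_top_inf:
  assumes "1 \<le> p" "p \<noteq> \<infinity>" "Np p f S < \<infinity>"
  shows "infsum (\<lambda>k. enn_powr (f k) (real_of_ereal p)) S < \<infinity>"
proof -
  have q: "real_of_ereal p \<ge> 1" using realp_pos assms by auto
  then show ?thesis using assms ep_top_iff[of "1 / real_of_ereal p"] by (simp add: Np_def less_top[symmetric])
qed

lemma rep_fzero: "(\<And>\<tau>. \<tau> \<in> T \<Longrightarrow> v \<tau> \<in> A) \<Longrightarrow> rep A T fzero v (\<lambda>_. None)"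
  by (simp add: rep_def fzero_def)

lemma lower_fzero:
  assumes p: "1 \<le> p" and md: "metric_on d"
  shows "Np p (\<lambda>i. setdist_e d (x i) A) I \<le> Wp d A p (I,x) fzero"
  unfolding Wp_def
proof (rule INF_greatest)
  fix m assume "m \<in> {m. is_matching A (I,x) fzero m}"
  then obtain K \<phi> z w where m: "m = (K,\<phi>,z,w)" and im: "is_matching A (I,x) fzero (K,\<phi>,z,w)"
    by (cases m) auto
  have K: "K = {}" "K \<subseteq> I" and zA: "\<And>i. i \<in> I \<Longrightarrow> z i \<in> A" using im by (auto simp: is_matching_def fzero_def)
  have e: "pcost d p (I,x) fzero m = Np p (\<lambda>i. d (x i) (z i)) I"
    using pcost_N[OF K(2), where y="\<lambda>_. undefined" and J="{}" and d=d and p=p and x=x and \<phi>=\<phi> and z=z and w=w] K by (simp add: m fzero_def N_reindex o_def)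
  show "Np p (\<lambda>i. setdist_e d (x i) A) I \<le> pcost d p (I,x) fzero m"
    unfolding e by (rule N_mono[OF p]) (simp add: sd_le zA)
qed

lemma Dbar_fin:
  assumes mp: "metric_pair d A" and p: "1 \<le> p" and a: "(I,x) \<in> Dbar d A p" and \<delta>: "\<delta> > 0"
  shows "finite {i\<in>I. ennreal \<delta> \<le> setdist_e d (x i) A}"
proof (cases "p = \<infinity>")
  case True
  then have "finite (fst (u_part d A (ennreal \<delta>) (I,x)))" using a \<delta> by (simp add: Dbar_def)
  moreover have "fst (u_part d A (ennreal \<delta>) (I,x)) = {i\<in>I. ennreal \<delta> \<le> setdist_e d (x i) A}"
    by (auto simp: u_part_def thick_def)
  ultimately show ?thesis by simp
next
  case False
  have md: "metric_on d" using mp by (simp add: metric_pair_def)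
  have q: "real_of_ereal p \<ge> 1" using realp_pos p False by auto
  have fu: "finite (fst (u_part d A \<infinity> (I,x)))" and wl: "Wp d A p (l_part d A \<infinity> (I,x)) fzero < \<infinity>"
    using a False by (auto simp: Dbar_def)
  define LI where "LI = {i\<in>I. x i \<in> thick d A \<infinity> - A}"
  have lp: "l_part d A \<infinity> (I,x) = (LI, x)" by (simp add: l_part_def LI_def)
  have "Np p (\<lambda>i. setdist_e d (x i) A) LI < \<infinity>"
    using lower_fzero[OF p md, of x A LI] wl lp by simp
  then have inf: "infsum (\<lambda>i. enn_powr (setdist_e d (x i) A) (real_of_ereal p)) LI < \<infinity>"
    using N_lt_top_inf[OF p False] by blast
  define B where "B = {i\<in>LI. ennreal \<delta> \<le> setdist_e d (x i) A}"
  have "finite B"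
  proof (rule ccontr)
    assume "infinite B"
    have "infsum (\<lambda>i. enn_powr (setdist_e d (x i) A) (real_of_ereal p)) B = \<infinity>"
    proof (rule infsum_superconst_infinite_ennreal)
      show "infinite B" by fact
      show "enn_powr (ennreal \<delta>) (real_of_ereal p) > 0" using \<delta> by (simp add: enn_powr_def)
      fix i assume "i \<in> B"
      then show "enn_powr (setdist_e d (x i) A) (real_of_ereal p) \<ge> enn_powr (ennreal \<delta>) (real_of_ereal p)"
        using q by (intro ep_mono) (auto simp: B_def)
    qed
    moreover have "infsum (\<lambda>i. enn_powr (setdist_e d (x i) A) (real_of_ereal p)) B \<le> infsum (\<lambda>i. enn_powr (setdist_e d (x i) A) (real_of_ereal p)) LI"
      by (rule infsum_subset_enn) (auto simp: B_def)
    ultimately show False using inf by simp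
  qed
  moreover have "{i\<in>I. ennreal \<delta> \<le> setdist_e d (x i) A} \<subseteq> fst (u_part d A \<infinity> (I,x)) \<union> B"
  proof
    fix i assume i: "i \<in> {i\<in>I. ennreal \<delta> \<le> setdist_e d (x i) A}"
    have "x i \<notin> A"
    proof
      assume "x i \<in> A"
      then have "setdist_e d (x i) A = 0" using sd_in[OF md] by blast
      then show False using i \<delta> by simp
    qed
    then show "i \<in> fst (u_part d A \<infinity> (I,x)) \<union> B" using i by (auto simp: u_part_def B_def LI_def)
  qed
  ultimately show ?thesis using fu by (meson finite_UnI finite_subset)
qed

lemma Dfin_Dbar:
  assumes mp: "metric_pair d A" and dm: "dist_minimizing d A" and p: "1 \<le> p" and a: "\<alpha> \<in> Dfin A"
  shows "\<alpha> \<in> Dbar d A p"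
proof -
  obtain I x where ax: "\<alpha> = (I,x)" by (cases \<alpha>)
  have fI: "finite I" and fs: "(I,x) \<in> fsums A" using a ax by (auto simp: Dfin_def)
  have md: "metric_on d" using mp by (simp add: metric_pair_def)
  show ?thesis
  proof (cases "p = \<infinity>")
    case True
    then show ?thesis using fI fs ax by (auto simp: Dbar_def u_part_def)
  next
    case False
    define LI where "LI = {i\<in>I. x i \<in> thick d A \<infinity> - A}"
    have lp: "l_part d A \<infinity> (I,x) = (LI, x)" by (simp add: l_part_def LI_def)
    have fin: "setdist_e d (x i) A < \<infinity>" if "i \<in> LI" for i using that by (auto simp: LI_def thick_def)
    have r1: "rep A LI (LI,x) x Some" by (auto simp: rep_def)
    have r2: "rep A LI fzero (\<lambda>i. near d A (x i)) (\<lambda>_. None)"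
      by (rule rep_fzero) (use near[OF dm fin] in auto)
    have "Wp d A p (LI,x) fzero \<le> Np p (\<lambda>i. d (x i) (near d A (x i))) LI"
      using key[OF p r1 r2[unfolded fzero_def]] by (simp add: fzero_def)
    also have "\<dots> < \<infinity>"
      by (rule N_lt_top_fin[OF p]) (use fI near[OF dm fin] in \<open>auto simp: LI_def thick_def\<close>)
    finally show ?thesis using False fI fs ax lp by (auto simp: Dbar_def u_part_def)
  qed
qed

lemma one_step:
  fixes h :: "nat \<Rightarrow> nat \<Rightarrow> 'b" and Q :: "nat \<Rightarrow> nat \<Rightarrow> 'b \<Rightarrow> bool" and s :: "nat \<Rightarrow> nat"
  assumes fin: "finite {v. Q m k v}"
  shows "\<exists>r'::nat\<Rightarrow>nat. strict_mono r' \<and> ((\<exists>v. \<forall>i. h (s (r' i)) m = v) \<or> (\<forall>i. \<not> Q m k (h (s (r' i)) m)))"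
proof (cases "finite {i. Q m k (h (s i) m)}")
  case True
  define S where "S = {i. \<not> Q m k (h (s i) m)}"
  have "S = UNIV - {i. Q m k (h (s i) m)}" by (auto simp: S_def)
  then have inf: "infinite S" using True by (simp add: Diff_infinite_finite infinite_UNIV_nat)
  have "strict_mono (enumerate S)" by (rule strict_mono_enumerate[OF inf])
  moreover have "\<forall>i. \<not> Q m k (h (s (enumerate S i)) m)" using enumerate_in_set[OF inf] by (auto simp: S_def)
  ultimately show ?thesis by blast
next
  case False
  have sub: "{i. Q m k (h (s i) m)} \<subseteq> (\<Union>v\<in>{v. Q m k v}. {i. h (s i) m = v})" by auto
  have "\<exists>v\<in>{v. Q m k v}. infinite {i. h (s i) m = v}"
  proof (rule ccontr)
    assume "\<not> ?thesis"
    then have "finite (\<Union>v\<in>{v. Q m k v}. {i. h (s i) m = v})" using fin by auto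
    then show False using False sub finite_subset by blast
  qed
  then obtain v where inf: "infinite {i. h (s i) m = v}" by blast
  define S where "S = {i. h (s i) m = v}"
  have inf': "infinite S" using inf by (simp add: S_def)
  have "strict_mono (enumerate S)" by (rule strict_mono_enumerate[OF inf'])
  moreover have "\<forall>i. h (s (enumerate S i)) m = v" using enumerate_in_set[OF inf'] by (auto simp: S_def)
  ultimately show ?thesis by blast
qed

lemma diag:
  fixes h :: "nat \<Rightarrow> nat \<Rightarrow> 'b" and Q :: "nat \<Rightarrow> nat \<Rightarrow> 'b \<Rightarrow> bool"
  assumes fin: "\<And>m k. finite {v. Q m k v}"
  shows "\<exists>r. strict_mono r \<and> (\<forall>m. (\<exists>v. \<forall>\<^sub>F n in sequentially. h (r n) m = v) \<or>
            (\<forall>k. \<forall>\<^sub>F n in sequentially. \<not> Q m k (h (r n) m)))"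
proof -
  define P where "P n s \<longleftrightarrow> (\<exists>v. \<forall>i. h (s i) (fst (prod_decode n)) = v) \<or> (\<forall>i. \<not> Q (fst (prod_decode n)) (snd (prod_decode n)) (h (s i) (fst (prod_decode n))))" for n and s :: "nat \<Rightarrow> nat"
  interpret subseqs P
  proof
    fix n and s :: "nat \<Rightarrow> nat" assume "strict_mono s"
    show "\<exists>r'. strict_mono r' \<and> P n (s \<circ> r')"
      unfolding P_def o_def by (rule one_step[OF fin])
  qed
  have stab: "P n (s \<circ> r)" if "strict_mono r" "P n s" for r s n
    using that by (auto simp: P_def)
  have H: "P n (diagseq \<circ> ((+) (Suc n)))" for n
    by (rule diagseq_holds) (rule stab)
  show ?thesis
  proof (intro exI[of _ diagseq] conjI allI subseq_diagseq)
    fix m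
    have ev: "(\<exists>v. \<forall>\<^sub>F j in sequentially. h (diagseq j) m = v) \<or> (\<forall>\<^sub>F j in sequentially. \<not> Q m k (h (diagseq j) m))" for k
    proof -
      define n where "n = prod_encode (m, k)"
      have pd: "prod_decode n = (m, k)" by (simp add: n_def)
      have shift: "\<forall>\<^sub>F j in sequentially. R j" if "\<forall>i. R (Suc n + i)" for R :: "nat \<Rightarrow> bool"
        unfolding eventually_sequentially
      proof (rule exI[of _ "Suc n"], intro allI impI)
        fix j assume "Suc n \<le> j"
        then have e: "j = Suc n + (j - Suc n)" by simp
        show "R j" using that[rule_format, of "j - Suc n"] e by simp
      qed
      from H[of n] have "(\<exists>v. \<forall>i. h ((diagseq \<circ> (+) (Suc n)) i) m = v) \<or> (\<forall>i. \<not> Q m k (h ((diagseq \<circ> (+) (Suc n)) i) m))"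
        unfolding P_def pd by simp
      then show ?thesis
      proof (elim disjE exE)
        fix v assume "\<forall>i. h ((diagseq \<circ> (+) (Suc n)) i) m = v"
        then have "\<forall>\<^sub>F j in sequentially. h (diagseq j) m = v" by (intro shift) simp
        then show ?thesis by blast
      next
        assume "\<forall>i. \<not> Q m k (h ((diagseq \<circ> (+) (Suc n)) i) m)"
        then show ?thesis by (intro disjI2 shift) simp
      qed
    qed
    show "(\<exists>v. \<forall>\<^sub>F n in sequentially. h (diagseq n) m = v) \<or> (\<forall>k. \<forall>\<^sub>F n in sequentially. \<not> Q m k (h (diagseq n) m))"
      using ev by blast
  qed
qed

definition cc :: "('a \<Rightarrow> 'a \<Rightarrow> ennreal) \<Rightarrow> 'a set \<Rightarrow> (nat \<Rightarrow> 'a) \<Rightarrow> (nat \<Rightarrow> 'a) \<Rightarrow> nat set \<Rightarrow> (nat \<Rightarrow> nat) \<Rightarrow> nat + nat \<Rightarrow> ennreal" where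
  "cc d A x y K \<phi> \<pi> = (case \<pi> of
     Inl i \<Rightarrow> (if i \<in> K then (if setdist_e d (y (\<phi> i)) A \<le> setdist_e d (x i) A then d (x i) (y (\<phi> i)) else 0) else setdist_e d (x i) A)
   | Inr j \<Rightarrow> (if j \<in> \<phi> ` K then (if setdist_e d (y j) A \<le> setdist_e d (x (inv_into K \<phi> j)) A then 0 else d (x (inv_into K \<phi> j)) (y j)) else setdist_e d (y j) A))"

lemma cc_sigma:
  assumes p: "1 \<le> p" and md: "metric_on d" and im: "is_matching A (I,x) (J,y) (K,\<phi>,z,w)"
  shows "Np p (cc d A x y K \<phi>) (Inl ` I \<union> Inr ` J) \<le> pcost d p (I,x) (J,y) (K,\<phi>,z,w)"
    and "(\<forall>i\<in>I-K. d (x i) (z i) = setdist_e d (x i) A) \<Longrightarrow> (\<forall>j\<in>J-\<phi>`K. d (w j) (y j) = setdist_e d (y j) A)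
         \<Longrightarrow> pcost d p (I,x) (J,y) (K,\<phi>,z,w) \<le> Np p (cc d A x y K \<phi>) (Inl ` I \<union> Inr ` J)"
proof -
  have KI: "K \<subseteq> I" and inj: "inj_on \<phi> K" and KJ: "\<phi> ` K \<subseteq> J" and zA: "\<And>i. i \<in> I - K \<Longrightarrow> z i \<in> A"
    and wA: "\<And>j. j \<in> J - \<phi> ` K \<Longrightarrow> w j \<in> A"
    using im by (auto simp: is_matching_def)
  define own where "own i \<longleftrightarrow> setdist_e d (y (\<phi> i)) A \<le> setdist_e d (x i) A" for i
  define \<sigma> where "\<sigma> \<pi> = (case \<pi> of Inl i \<Rightarrow> (if i \<in> K \<and> \<not> own i then Inr (\<phi> i) else Inl i) | Inr j \<Rightarrow> Inr j)" for \<pi>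
  define T where "T = Inl ` I \<union> Inr ` (J - \<phi> ` K)"
  define P where "P = (Inl ` I \<union> Inr ` J :: (nat + nat) set)"
  define E where "E = (\<lambda>\<pi>. case \<pi> of Inl i \<Rightarrow> (if i\<in>K then d (x i) (y (\<phi> i)) else d (x i) (z i)) | Inr j \<Rightarrow> d (w j) (y j))"
  have pc: "pcost d p (I,x) (J,y) (K,\<phi>,z,w) = Np p E T"
    unfolding E_def T_def by (rule pcost_N[OF KI])
  have injs: "inj_on \<sigma> T"
  proof (rule inj_onI)
    fix a b assume a: "a \<in> T" and b: "b \<in> T" and ab: "\<sigma> a = \<sigma> b"
    have sl: "\<sigma> (Inl i) = (if i \<in> K \<and> \<not> own i then Inr (\<phi> i) else Inl i)" for i by (simp add: \<sigma>_def)
    have sr: "\<sigma> (Inr j) = Inr j" for j by (simp add: \<sigma>_def)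
    show "a = b"
    proof (cases a)
      case (Inl i)
      show ?thesis
      proof (cases b)
        case (Inl i')
        show ?thesis
        proof (cases "i \<in> K \<and> \<not> own i")
          case True
          then have "i' \<in> K \<and> \<not> own i' \<and> \<phi> i' = \<phi> i"
            using ab \<open>a = Inl i\<close> Inl sl[of i] sl[of i'] by (auto split: if_splits)
          then have "i = i'" using True inj by (metis inj_onD)
          then show ?thesis using \<open>a = Inl i\<close> Inl by simp
        next
          case False
          then have "\<sigma> a = Inl i" using \<open>a = Inl i\<close> sl by simp
          then have "\<sigma> b = Inl i" using ab by simp
          then have "i' = i" using Inl sl[of i'] by (auto split: if_splits)
          then show ?thesis using \<open>a = Inl i\<close> Inl by simp
        qed
      next
        case (Inr j)
        then have j: "j \<notin> \<phi> ` K" using b by (auto simp: T_def)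
        have "\<sigma> b = Inr j" using Inr sr by simp
        then have "i \<in> K \<and> j = \<phi> i" using ab \<open>a = Inl i\<close> sl[of i] by (auto split: if_splits)
        then show ?thesis using j by auto
      qed
    next
      case (Inr j)
      then have j: "j \<notin> \<phi> ` K" using a by (auto simp: T_def)
      have sa: "\<sigma> a = Inr j" using Inr sr by simp
      show ?thesis
      proof (cases b)
        case (Inl i)
        then have "i \<in> K \<and> j = \<phi> i" using ab sa sl[of i] by (auto split: if_splits)
        then show ?thesis using j by auto
      next
        case (Inr j')
        then show ?thesis using ab sa sr \<open>a = Inr j\<close> by simp
      qed
    qed
  qed
  have sT: "\<sigma> ` T \<subseteq> P"
  proof
    fix \<pi> assume "\<pi> \<in> \<sigma> ` T"
    then obtain \<tau> where t: "\<tau> \<in> T" "\<pi> = \<sigma> \<tau>" by blast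
    show "\<pi> \<in> P"
    proof (cases \<tau>)
      case (Inl i)
      then show ?thesis using t KI KJ by (cases "i \<in> K \<and> \<not> own i") (auto simp: \<sigma>_def T_def P_def)
    next
      case (Inr j)
      then show ?thesis using t by (auto simp: \<sigma>_def T_def P_def)
    qed
  qed
  have zero: "cc d A x y K \<phi> \<pi> = 0" if "\<pi> \<in> P - \<sigma> ` T" for \<pi>
  proof (cases \<pi>)
    case (Inl i)
    then have "i \<in> I" "Inl i \<notin> \<sigma> ` T" using that by (auto simp: P_def)
    have "i \<in> K \<and> \<not> own i"
    proof (rule ccontr)
      assume c: "\<not> (i \<in> K \<and> \<not> own i)"
      then have "\<sigma> (Inl i) = Inl i" by (simp add: \<sigma>_def)
      moreover have "Inl i \<in> T" using \<open>i \<in> I\<close> by (simp add: T_def)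
      ultimately have "Inl i \<in> \<sigma> ` T" by (metis image_eqI)
      then show False using \<open>Inl i \<notin> \<sigma> ` T\<close> by simp
    qed
    then show ?thesis using Inl by (simp add: cc_def own_def)
  next
    case (Inr j)
    then have j: "j \<in> J" "Inr j \<notin> \<sigma> ` T" using that by (auto simp: P_def)
    show ?thesis
    proof (cases "j \<in> \<phi> ` K")
      case True
      then obtain i where i: "i \<in> K" "j = \<phi> i" by auto
      have ii: "inv_into K \<phi> j = i" using i inj by (simp add: inv_into_f_f)
      have "\<sigma> (Inl i) = Inr j" if "\<not> own i" using that i by (simp add: \<sigma>_def)
      moreover have "Inl i \<in> T" using i KI by (auto simp: T_def)
      ultimately have "own i" using j by (metis image_eqI)
      then show ?thesis using Inr True ii i by (simp add: cc_def own_def)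
    next
      case False
      then have "Inr j \<in> \<sigma> ` T" using j by (auto simp: \<sigma>_def T_def intro!: image_eqI[of _ _ "Inr j"])
      then show ?thesis using j by simp
    qed
  qed
  have eqN: "Np p (cc d A x y K \<phi>) P = Np p (cc d A x y K \<phi> \<circ> \<sigma>) T"
    using N_zero_out[OF p sT zero] N_reindex[OF injs] by simp
  have le: "(cc d A x y K \<phi> \<circ> \<sigma>) \<tau> \<le> E \<tau>" if tT: "\<tau> \<in> T" for \<tau>
  proof -
    consider (a) i where "\<tau> = Inl i" "i \<in> K" "own i" | (b) i where "\<tau> = Inl i" "i \<in> K" "\<not> own i"
      | (c) i where "\<tau> = Inl i" "i \<in> I - K" | (e) j where "\<tau> = Inr j" "j \<in> J - \<phi> ` K"
      using tT KI unfolding T_def by blast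
    then show ?thesis
    proof cases
      case a then show ?thesis by (simp add: \<sigma>_def cc_def E_def own_def)
    next
      case b
      have ii: "inv_into K \<phi> (\<phi> i) = i" using b inj by (simp add: inv_into_f_f)
      show ?thesis using b ii by (simp add: \<sigma>_def cc_def E_def own_def)
    next
      case c then show ?thesis using zA[of i] by (simp add: \<sigma>_def cc_def E_def sd_le)
    next
      case e then show ?thesis using wA[of j] metric_onD(2)[OF md, of "w j" "y j"]
        by (simp add: \<sigma>_def cc_def E_def sd_le)
    qed
  qed
  show "Np p (cc d A x y K \<phi>) (Inl ` I \<union> Inr ` J) \<le> pcost d p (I,x) (J,y) (K,\<phi>,z,w)"
    unfolding pc P_def[symmetric] eqN by (rule N_mono[OF p le])
  assume nz: "\<forall>i\<in>I-K. d (x i) (z i) = setdist_e d (x i) A" and nw: "\<forall>j\<in>J-\<phi>`K. d (w j) (y j) = setdist_e d (y j) A"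
  have ge: "E \<tau> \<le> (cc d A x y K \<phi> \<circ> \<sigma>) \<tau>" if tT: "\<tau> \<in> T" for \<tau>
  proof -
    consider (a) i where "\<tau> = Inl i" "i \<in> K" "own i" | (b) i where "\<tau> = Inl i" "i \<in> K" "\<not> own i"
      | (c) i where "\<tau> = Inl i" "i \<in> I - K" | (e) j where "\<tau> = Inr j" "j \<in> J - \<phi> ` K"
      using tT KI unfolding T_def by blast
    then show ?thesis
    proof cases
      case a then show ?thesis by (simp add: \<sigma>_def cc_def E_def own_def)
    next
      case b
      have ii: "inv_into K \<phi> (\<phi> i) = i" using b inj by (simp add: inv_into_f_f)
      show ?thesis using b ii by (simp add: \<sigma>_def cc_def E_def own_def)
    next
      case c then show ?thesis using nz by (simp add: \<sigma>_def cc_def E_def)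
    next
      case e then show ?thesis using nw by (simp add: \<sigma>_def cc_def E_def)
    qed
  qed
  show "pcost d p (I,x) (J,y) (K,\<phi>,z,w) \<le> Np p (cc d A x y K \<phi>) (Inl ` I \<union> Inr ` J)"
    unfolding pc P_def[symmetric] eqN by (rule N_mono[OF p ge])
qed

lemma enn_lt_add: "(a::ennreal) < \<infinity> \<Longrightarrow> e > 0 \<Longrightarrow> a < a + ennreal e"
  by (cases a rule: ennreal_cases) (auto simp: ennreal_plus[symmetric] ennreal_less_iff simp del: ennreal_plus)

lemma le_mult_1: "(\<epsilon>::real) \<ge> 0 \<Longrightarrow> (c::ennreal) \<le> ennreal (1+\<epsilon>) * c"
proof -
  assume "\<epsilon> \<ge> 0"
  then have "1 \<le> ennreal (1+\<epsilon>)" by simp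
  then have "1 * c \<le> ennreal (1+\<epsilon>) * c" by (rule mult_right_mono) simp
  then show ?thesis by simp
qed

lemma lsc_core:
  fixes a :: ennreal and \<epsilon> :: real
  assumes a: "0 < a" and e: "0 < \<epsilon>"
  shows "\<exists>\<eta>>0. \<forall>dd \<rho>. a \<le> dd + \<rho> \<longrightarrow> \<rho> < ennreal \<eta> \<longrightarrow> \<rho> < a \<and> a \<le> ennreal (1+\<epsilon>) * dd"
proof (cases "a = \<infinity>")
  case True
  show ?thesis
  proof (intro exI[of _ 1] conjI allI impI)
    fix dd \<rho> :: ennreal assume h: "a \<le> dd + \<rho>" "\<rho> < ennreal 1"
    have "ennreal 1 < \<infinity>" by simp
    then show "\<rho> < a" using less_trans[OF h(2)] True by simp
    have "\<rho> \<noteq> \<infinity>" using h(2) by auto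
    then have "dd = \<infinity>" using h(1) True by (auto simp: top_unique ennreal_add_eq_top)
    then show "a \<le> ennreal (1+\<epsilon>) * dd" using e by (simp add: ennreal_mult_top)
  qed simp
next
  case False
  then obtain A' where aA: "a = ennreal A'" and A0: "A' > 0" using a
    by (cases a rule: ennreal_cases) auto
  define \<eta> where "\<eta> = A' * \<epsilon> / (1 + \<epsilon>)"
  have \<eta>0: "\<eta> > 0" using A0 e by (simp add: \<eta>_def)
  have \<eta>A: "\<eta> < A'" using A0 e by (simp add: \<eta>_def field_simps)
  have key: "(1 + \<epsilon>) * (A' - \<eta>) = A'" using e by (simp add: \<eta>_def field_simps)
  show ?thesis
  proof (intro exI[of _ \<eta>] conjI allI impI \<eta>0)
    fix dd \<rho> :: ennreal assume h: "a \<le> dd + \<rho>" "\<rho> < ennreal \<eta>"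
    obtain R where rR: "\<rho> = ennreal R" and R0: "R \<ge> 0" and R\<eta>: "R < \<eta>" using h(2)
      by (cases \<rho> rule: ennreal_cases) (auto simp: ennreal_less_iff)
    show "\<rho> < a" using rR aA R\<eta> \<eta>A R0 by (simp add: ennreal_less_iff)
    show "a \<le> ennreal (1+\<epsilon>) * dd"
    proof (cases "dd = \<infinity>")
      case True then show ?thesis using e by (simp add: ennreal_mult_top)
    next
      case False
      then obtain D where dD: "dd = ennreal D" and D0: "D \<ge> 0" by (cases dd rule: ennreal_cases) auto
      have "ennreal A' \<le> ennreal (D + R)" using h(1) aA dD rR ennreal_plus[OF D0 R0] by simp
      then have AD: "A' \<le> D + R" using D0 R0 ennreal_le_iff[of "D + R" A'] by simp
      have "A' = (1 + \<epsilon>) * (A' - \<eta>)" using key by simp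
      also have "\<dots> \<le> (1 + \<epsilon>) * D" using AD R\<eta> e by (intro mult_left_mono) auto
      finally have "A' \<le> (1 + \<epsilon>) * D" .
      then have "ennreal A' \<le> ennreal ((1+\<epsilon>) * D)" by (rule ennreal_leI)
      also have "\<dots> = ennreal (1+\<epsilon>) * ennreal D" using e D0 by (intro ennreal_mult) auto
      finally show ?thesis unfolding aA dD .
    qed
  qed
qed

lemma ev_uniq:
  assumes "\<forall>\<^sub>F n in sequentially. F n = u" "\<forall>\<^sub>F n in sequentially. F n = u'"
  shows "u = u'"
proof -
  have "\<forall>\<^sub>F n in sequentially. F n = u \<and> F n = u'" using assms by (rule eventually_conj)
  then obtain N where "\<forall>n\<ge>N. F n = u \<and> F n = u'" by (auto simp: eventually_sequentially)
  then show ?thesis by auto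
qed

lemma ev_ex:
  assumes "\<forall>\<^sub>F n in sequentially. P n"
  shows "\<exists>n. P n"
  using assms by (auto simp: eventually_sequentially)

lemma opt_exists:
  assumes mp: "metric_pair d A" and dm: "dist_minimizing d A" and p: "1 \<le> p"
    and a: "(I,x) \<in> Dbar d A p" and b: "(J,y) \<in> Dbar d A p"
    and Wfin: "Wp d A p (I,x) (J,y) < \<infinity>"
  shows "\<exists>K \<phi> z w. is_matching A (I,x) (J,y) (K,\<phi>,z,w) \<and> pcost d p (I,x) (J,y) (K,\<phi>,z,w) \<le> Wp d A p (I,x) (J,y)
     \<and> (\<forall>i\<in>I-K. d (x i) (z i) = setdist_e d (x i) A) \<and> (\<forall>j\<in>J-\<phi>`K. d (w j) (y j) = setdist_e d (y j) A)"
proof -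
  have md: "metric_on d" and mc: "mclosed d A" using mp by (auto simp: metric_pair_def)
  have fsx: "x i \<notin> A" if "i \<in> I" for i using a that by (auto simp: Dbar_def fsums_def split: if_splits)
  have fsy: "y j \<notin> A" if "j \<in> J" for j using b that by (auto simp: Dbar_def fsums_def split: if_splits)
  define Wv where "Wv = Wp d A p (I,x) (J,y)"
  have ex: "\<exists>m. is_matching A (I,x) (J,y) m \<and> pcost d p (I,x) (J,y) m < Wv + ennreal (1 / real (Suc n))" for n
  proof -
    have "Wv < Wv + ennreal (1 / real (Suc n))" using Wfin by (intro enn_lt_add) (auto simp: Wv_def)
    then show ?thesis unfolding Wv_def Wp_def by (simp add: INF_less_iff)
  qed
  obtain M where M: "\<forall>n. is_matching A (I,x) (J,y) (M n) \<and> pcost d p (I,x) (J,y) (M n) < Wv + ennreal (1 / real (Suc n))"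
  proof -
    have "\<forall>n. \<exists>m. is_matching A (I,x) (J,y) m \<and> pcost d p (I,x) (J,y) m < Wv + ennreal (1 / real (Suc n))"
      using ex by blast
    from choice[OF this] show ?thesis using that by blast
  qed
  define KK where "KK n = fst (M n)" for n
  define \<Phi> where "\<Phi> n = fst (snd (M n))" for n
  define Z where "Z n = fst (snd (snd (M n)))" for n
  define WW where "WW n = snd (snd (snd (M n)))" for n
  have Meq: "M n = (KK n, \<Phi> n, Z n, WW n)" for n by (simp add: KK_def \<Phi>_def Z_def WW_def)
  have mat: "is_matching A (I,x) (J,y) (KK n, \<Phi> n, Z n, WW n)" for n using M Meq by metis
  have pcM: "pcost d p (I,x) (J,y) (KK n, \<Phi> n, Z n, WW n) < Wv + ennreal (1 / real (Suc n))" for n using M Meq by metis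
  have KKI: "KK n \<subseteq> I" and injn: "inj_on (\<Phi> n) (KK n)" and KKJ: "\<Phi> n ` KK n \<subseteq> J" for n
    using mat[of n] by (auto simp: is_matching_def)
  define f where "f n i = (if i \<in> KK n then Some (\<Phi> n i) else None)" for n i
  define g where "g n j = (if j \<in> \<Phi> n ` KK n then Some (inv_into (KK n) (\<Phi> n) j) else None)" for n j
  define hh where "hh n m = (if even m then f n (m div 2) else g n (m div 2))" for n m :: nat
  define Q where "Q m k v \<longleftrightarrow> (\<exists>j. v = Some j \<and> (if even m then j \<in> J \<and> ennreal (1 / real (Suc k)) \<le> setdist_e d (y j) A
       else j \<in> I \<and> ennreal (1 / real (Suc k)) \<le> setdist_e d (x j) A))" for m :: nat and k :: nat and v
  have finQ: "finite {v. Q m k v}" for m k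
  proof (cases "even m")
    case True
    have "{v. Q m k v} \<subseteq> Some ` {j\<in>J. ennreal (1 / real (Suc k)) \<le> setdist_e d (y j) A}"
      using True by (auto simp: Q_def)
    moreover have "finite {j\<in>J. ennreal (1 / real (Suc k)) \<le> setdist_e d (y j) A}"
      by (rule Dbar_fin[OF mp p b]) simp
    ultimately show ?thesis using finite_subset by blast
  next
    case False
    have "{v. Q m k v} \<subseteq> Some ` {j\<in>I. ennreal (1 / real (Suc k)) \<le> setdist_e d (x j) A}"
      using False by (auto simp: Q_def)
    moreover have "finite {j\<in>I. ennreal (1 / real (Suc k)) \<le> setdist_e d (x j) A}"
      by (rule Dbar_fin[OF mp p a]) simp
    ultimately show ?thesis using finite_subset by blast
  qed
  obtain rs where rs: "strict_mono rs" and conv: "\<And>m. (\<exists>v. \<forall>\<^sub>F n in sequentially. hh (rs n) m = v) \<or>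
            (\<forall>k. \<forall>\<^sub>F n in sequentially. \<not> Q m k (hh (rs n) m))"
    using diag[of Q hh, OF finQ] by blast
  have convI: "(\<exists>v. \<forall>\<^sub>F n in sequentially. f (rs n) i = v) \<or> (\<forall>k. \<forall>\<^sub>F n in sequentially. \<not> Q (2*i) k (f (rs n) i))" for i
    using conv[of "2*i"] by (simp add: hh_def)
  have convJ: "(\<exists>v. \<forall>\<^sub>F n in sequentially. g (rs n) j = v) \<or> (\<forall>k. \<forall>\<^sub>F n in sequentially. \<not> Q (2*j+1) k (g (rs n) j))" for j
    using conv[of "2*j+1"] by (simp add: hh_def)
  define K where "K = {i\<in>I. \<exists>j. \<forall>\<^sub>F n in sequentially. f (rs n) i = Some j}"
  define \<phi> where "\<phi> i = (SOME j. \<forall>\<^sub>F n in sequentially. f (rs n) i = Some j)" for i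
  have evK: "\<forall>\<^sub>F n in sequentially. i \<in> KK (rs n) \<and> \<Phi> (rs n) i = \<phi> i" if "i \<in> K" for i
  proof -
    have "\<forall>\<^sub>F n in sequentially. f (rs n) i = Some (\<phi> i)"
      unfolding \<phi>_def by (rule someI_ex) (use that in \<open>auto simp: K_def\<close>)
    then show ?thesis by (rule eventually_mono) (auto simp: f_def split: if_splits)
  qed
  have KI: "K \<subseteq> I" by (auto simp: K_def)
  have injK: "inj_on \<phi> K"
  proof (rule inj_onI)
    fix i i' assume i: "i \<in> K" and i': "i' \<in> K" and e: "\<phi> i = \<phi> i'"
    have "\<forall>\<^sub>F n in sequentially. (i \<in> KK (rs n) \<and> \<Phi> (rs n) i = \<phi> i) \<and> (i' \<in> KK (rs n) \<and> \<Phi> (rs n) i' = \<phi> i')"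
      using evK[OF i] evK[OF i'] by (rule eventually_conj)
    then obtain n where "i \<in> KK (rs n)" "\<Phi> (rs n) i = \<phi> i" "i' \<in> KK (rs n)" "\<Phi> (rs n) i' = \<phi> i'"
      using ev_ex by blast
    then show "i = i'" using e injn[of "rs n"] by (metis inj_onD)
  qed
  have KJ: "\<phi> ` K \<subseteq> J"
  proof
    fix j assume "j \<in> \<phi> ` K"
    then obtain i where i: "i \<in> K" "j = \<phi> i" by auto
    obtain n where "i \<in> KK (rs n)" "\<Phi> (rs n) i = \<phi> i" using ev_ex[OF evK[OF i(1)]] by blast
    then show "j \<in> J" using KKJ[of "rs n"] i by auto
  qed
  define cl where "cl = cc d A x y K \<phi>"
  define cn where "cn n = cc d A x y (KK n) (\<Phi> n)" for n
  define PP where "PP = (Inl ` I \<union> Inr ` J :: (nat + nat) set)"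
  have lsc: "\<forall>\<^sub>F n in sequentially. cl \<pi> \<le> ennreal (1+\<epsilon>) * cn (rs n) \<pi>" if \<pi>P: "\<pi> \<in> PP" and e: "\<epsilon> > 0" for \<pi> \<epsilon>
  proof -
    have le1: "c \<le> ennreal (1+\<epsilon>) * c" for c using e by (intro le_mult_1) simp
    show ?thesis
    proof (cases \<pi>)
      case (Inl i)
      then have iI: "i \<in> I" using \<pi>P by (auto simp: PP_def)
      show ?thesis
      proof (cases "i \<in> K")
        case True
        show ?thesis using evK[OF True]
        proof (rule eventually_mono)
          fix n assume h: "i \<in> KK (rs n) \<and> \<Phi> (rs n) i = \<phi> i"
          then have "cn (rs n) \<pi> = cl \<pi>" using True Inl by (simp add: cn_def cl_def cc_def)
          then show "cl \<pi> \<le> ennreal (1+\<epsilon>) * cn (rs n) \<pi>" using le1 by simp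
        qed
      next
        case False
        define a where "a = setdist_e d (x i) A"
        have a0: "0 < a" unfolding a_def by (rule sd_pos[OF mc fsx[OF iI]])
        have cla: "cl \<pi> = a" using False Inl by (simp add: cl_def cc_def a_def)
        from convI[of i] show ?thesis
        proof (elim disjE exE)
          fix v assume ev: "\<forall>\<^sub>F n in sequentially. f (rs n) i = v"
          show ?thesis
          proof (cases v)
            case None
            show ?thesis using ev
            proof (rule eventually_mono)
              fix n assume "f (rs n) i = v"
              then have "i \<notin> KK (rs n)" using None by (simp add: f_def split: if_splits)
              then have "cn (rs n) \<pi> = a" using Inl by (simp add: cn_def cc_def a_def)
              then show "cl \<pi> \<le> ennreal (1+\<epsilon>) * cn (rs n) \<pi>" using cla le1 by simp
            qed
          next
            case (Some j)
            then have "i \<in> K" using ev iI by (auto simp: K_def)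
            then show ?thesis using False by simp
          qed
        next
          assume esc: "\<forall>k. \<forall>\<^sub>F n in sequentially. \<not> Q (2*i) k (f (rs n) i)"
          obtain \<eta> where \<eta>: "\<eta> > 0" "\<forall>dd \<rho>. a \<le> dd + \<rho> \<longrightarrow> \<rho> < ennreal \<eta> \<longrightarrow> \<rho> < a \<and> a \<le> ennreal (1+\<epsilon>) * dd"
            using lsc_core[OF a0 e] by blast
          obtain k where k: "1 / real (Suc k) < \<eta>" using reals_Archimedean[OF \<eta>(1)] by (auto simp: inverse_eq_divide)
          have kk: "ennreal (1 / real (Suc k)) \<le> ennreal \<eta>" using k by (intro ennreal_leI) simp
          show ?thesis using esc[rule_format, of k]
          proof (rule eventually_mono)
            fix n assume nq: "\<not> Q (2*i) k (f (rs n) i)"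
            show "cl \<pi> \<le> ennreal (1+\<epsilon>) * cn (rs n) \<pi>"
            proof (cases "i \<in> KK (rs n)")
              case False
              then have "cn (rs n) \<pi> = a" using Inl by (simp add: cn_def cc_def a_def)
              then show ?thesis using cla le1 by simp
            next
              case True
              define j where "j = \<Phi> (rs n) i"
              have jJ: "j \<in> J" using KKJ True by (auto simp: j_def)
              have "\<not> ennreal (1 / real (Suc k)) \<le> setdist_e d (y j) A" using nq True jJ by (simp add: Q_def f_def j_def)
              then have "setdist_e d (y j) A < ennreal (1 / real (Suc k))" by (simp add: not_le)
              then have \<rho>: "setdist_e d (y j) A < ennreal \<eta>" using kk by (rule less_le_trans)
              have tri: "a \<le> d (x i) (y j) + setdist_e d (y j) A" unfolding a_def by (rule sd_tri[OF md])
              have r1: "setdist_e d (y j) A < a" and r2: "a \<le> ennreal (1+\<epsilon>) * d (x i) (y j)"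
                using \<eta>(2) tri \<rho> by blast+
              have "setdist_e d (y j) A \<le> a" using r1 by simp
              then have "cn (rs n) \<pi> = d (x i) (y j)" using True Inl by (simp add: cn_def cc_def a_def j_def)
              then show ?thesis using cla r2 by simp
            qed
          qed
        qed
      qed
    next
      case (Inr j)
      then have jJ: "j \<in> J" using \<pi>P by (auto simp: PP_def)
      show ?thesis
      proof (cases "j \<in> \<phi> ` K")
        case True
        define i0 where "i0 = inv_into K \<phi> j"
        have i0: "i0 \<in> K" "\<phi> i0 = j" using True by (auto simp: i0_def inv_into_into f_inv_into_f)
        show ?thesis using evK[OF i0(1)]
        proof (rule eventually_mono)
          fix n assume h: "i0 \<in> KK (rs n) \<and> \<Phi> (rs n) i0 = \<phi> i0"
          have jn: "j \<in> \<Phi> (rs n) ` KK (rs n)" using h i0 by force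
          have inv: "inv_into (KK (rs n)) (\<Phi> (rs n)) j = i0"
            using h i0 inv_into_f_f[OF injn[of "rs n"], of i0] by simp
          have "cn (rs n) \<pi> = cl \<pi>" using True jn inv Inr by (simp add: cn_def cl_def cc_def i0_def[symmetric])
          then show "cl \<pi> \<le> ennreal (1+\<epsilon>) * cn (rs n) \<pi>" using le1 by simp
        qed
      next
        case False
        define b where "b = setdist_e d (y j) A"
        have b0: "0 < b" unfolding b_def by (rule sd_pos[OF mc fsy[OF jJ]])
        have clb: "cl \<pi> = b" using False Inr by (simp add: cl_def cc_def b_def)
        from convJ[of j] show ?thesis
        proof (elim disjE exE)
          fix v assume ev: "\<forall>\<^sub>F n in sequentially. g (rs n) j = v"
          show ?thesis
          proof (cases v)
            case None
            show ?thesis using ev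
            proof (rule eventually_mono)
              fix n assume "g (rs n) j = v"
              then have "j \<notin> \<Phi> (rs n) ` KK (rs n)" using None by (simp add: g_def split: if_splits)
              then have "cn (rs n) \<pi> = b" using Inr by (simp add: cn_def cc_def b_def)
              then show "cl \<pi> \<le> ennreal (1+\<epsilon>) * cn (rs n) \<pi>" using clb le1 by simp
            qed
          next
            case (Some i0)
            have ev2: "\<forall>\<^sub>F n in sequentially. f (rs n) i0 = Some j"
              using ev
            proof (rule eventually_mono)
              fix n assume "g (rs n) j = v"
              then have j1: "j \<in> \<Phi> (rs n) ` KK (rs n)" and j2: "inv_into (KK (rs n)) (\<Phi> (rs n)) j = i0"
                using Some by (auto simp: g_def split: if_splits)
              have "i0 \<in> KK (rs n)" using inv_into_into[OF j1] j2 by simp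
              moreover have "\<Phi> (rs n) i0 = j" using f_inv_into_f[OF j1] j2 by simp
              ultimately show "f (rs n) i0 = Some j" by (simp add: f_def)
            qed
            obtain n where "f (rs n) i0 = Some j" using ev_ex[OF ev2] by blast
            then have i0I: "i0 \<in> I" using KKI by (auto simp: f_def split: if_splits)
            then have i0K: "i0 \<in> K" using ev2 by (auto simp: K_def)
            have ev3: "\<forall>\<^sub>F n in sequentially. f (rs n) i0 = Some (\<phi> i0)"
              by (rule eventually_mono[OF evK[OF i0K]]) (simp add: f_def)
            have "Some (\<phi> i0) = Some j" by (rule ev_uniq[OF ev3 ev2])
            then have "j \<in> \<phi> ` K" using i0K by force
            then show ?thesis using False by simp
          qed
        next
          assume esc: "\<forall>k. \<forall>\<^sub>F n in sequentially. \<not> Q (2*j+1) k (g (rs n) j)"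
          obtain \<eta> where \<eta>: "\<eta> > 0" "\<forall>dd \<rho>. b \<le> dd + \<rho> \<longrightarrow> \<rho> < ennreal \<eta> \<longrightarrow> \<rho> < b \<and> b \<le> ennreal (1+\<epsilon>) * dd"
            using lsc_core[OF b0 e] by blast
          obtain k where k: "1 / real (Suc k) < \<eta>" using reals_Archimedean[OF \<eta>(1)] by (auto simp: inverse_eq_divide)
          have kk: "ennreal (1 / real (Suc k)) \<le> ennreal \<eta>" using k by (intro ennreal_leI) simp
          show ?thesis using esc[rule_format, of k]
          proof (rule eventually_mono)
            fix n assume nq: "\<not> Q (2*j+1) k (g (rs n) j)"
            show "cl \<pi> \<le> ennreal (1+\<epsilon>) * cn (rs n) \<pi>"
            proof (cases "j \<in> \<Phi> (rs n) ` KK (rs n)")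
              case False
              then have "cn (rs n) \<pi> = b" using Inr by (simp add: cn_def cc_def b_def)
              then show ?thesis using clb le1 by simp
            next
              case True
              define i' where "i' = inv_into (KK (rs n)) (\<Phi> (rs n)) j"
              have i'K: "i' \<in> KK (rs n)" using True by (simp add: i'_def inv_into_into)
              have i'I: "i' \<in> I" using i'K KKI by auto
              have "\<not> ennreal (1 / real (Suc k)) \<le> setdist_e d (x i') A" using nq True i'I by (simp add: Q_def g_def i'_def)
              then have "setdist_e d (x i') A < ennreal (1 / real (Suc k))" by (simp add: not_le)
              then have \<rho>: "setdist_e d (x i') A < ennreal \<eta>" using kk by (rule less_le_trans)
              have tri0: "b \<le> d (y j) (x i') + setdist_e d (x i') A" unfolding b_def by (rule sd_tri[OF md])
              have tri: "b \<le> d (x i') (y j) + setdist_e d (x i') A" using tri0 metric_onD(2)[OF md, of "y j" "x i'"] by simp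
              have r1: "setdist_e d (x i') A < b" and r2: "b \<le> ennreal (1+\<epsilon>) * d (x i') (y j)"
                using \<eta>(2) tri \<rho> by blast+
              have "\<not> b \<le> setdist_e d (x i') A" using r1 by simp
              then have "cn (rs n) \<pi> = d (x i') (y j)" using True Inr by (simp add: cn_def cc_def b_def i'_def)
              then show ?thesis using clb r2 by simp
            qed
          qed
        qed
      qed
    qed
  qed

  have clW: "Np p cl PP \<le> Wv"
  proof (rule N_finite_approx[OF p])
    fix F assume F: "finite F" "F \<subseteq> PP"
    obtain W' where W': "Wv = ennreal W'" "W' \<ge> 0" using Wfin by (cases Wv rule: ennreal_cases) (auto simp: Wv_def)
    show "Np p cl F \<le> Wv"
    proof (rule ennreal_le_epsilon)
      fix e :: real assume e: "0 < e"
      define \<epsilon> where "\<epsilon> = min 1 (e / (W' + 2))"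
      have \<epsilon>0: "\<epsilon> > 0" using e W' by (simp add: \<epsilon>_def)
      have \<epsilon>1: "\<epsilon> \<le> 1" and \<epsilon>2: "\<epsilon> \<le> e / (W'+2)" by (auto simp: \<epsilon>_def)
      have ev1: "\<forall>\<^sub>F n in sequentially. \<forall>\<pi>\<in>F. cl \<pi> \<le> ennreal (1+\<epsilon>) * cn (rs n) \<pi>"
        using F by (intro eventually_ball_finite ballI lsc \<epsilon>0) auto
      have ev2: "\<forall>\<^sub>F n in sequentially. 1 / real (Suc (rs n)) \<le> \<epsilon>"
      proof -
        obtain N where N: "1 / real (Suc N) < \<epsilon>" using reals_Archimedean[OF \<epsilon>0] by (auto simp: inverse_eq_divide)
        show ?thesis unfolding eventually_sequentially
        proof (intro exI[of _ N] allI impI)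
          fix n assume "N \<le> n"
          then have "N \<le> rs n" using seq_suble[OF rs, of n] by linarith
          then have "1 / real (Suc (rs n)) \<le> 1 / real (Suc N)" by (intro divide_left_mono) auto
          then show "1 / real (Suc (rs n)) \<le> \<epsilon>" using N by linarith
        qed
      qed
      obtain n where n1: "\<forall>\<pi>\<in>F. cl \<pi> \<le> ennreal (1+\<epsilon>) * cn (rs n) \<pi>" and n2: "1 / real (Suc (rs n)) \<le> \<epsilon>"
        using ev_ex[OF eventually_conj[OF ev1 ev2]] by blast
      have X: "Np p (cn (rs n)) F \<le> ennreal W' + ennreal \<epsilon>"
      proof -
        have "Np p (cn (rs n)) F \<le> Np p (cn (rs n)) PP" using F by (intro N_subset[OF p]) auto
        also have "\<dots> \<le> pcost d p (I,x) (J,y) (KK (rs n), \<Phi> (rs n), Z (rs n), WW (rs n))"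
          unfolding cn_def PP_def by (rule cc_sigma(1)[OF p md mat])
        also have "\<dots> \<le> Wv + ennreal (1 / real (Suc (rs n)))" using pcM[of "rs n"] by simp
        also have "\<dots> \<le> ennreal W' + ennreal \<epsilon>" using n2 W' by (simp add: ennreal_leI add_left_mono)
        finally show ?thesis .
      qed
      have e1: "ennreal ((1+\<epsilon>)*(W'+\<epsilon>)) = ennreal (1+\<epsilon>) * ennreal (W'+\<epsilon>)" by (rule ennreal_mult) (use \<epsilon>0 W' in auto)
      have e2: "ennreal (W'+\<epsilon>) = ennreal W' + ennreal \<epsilon>" by (rule ennreal_plus) (use \<epsilon>0 W' in auto)
      have R: "(1+\<epsilon>)*(W'+\<epsilon>) \<le> W' + e"
      proof -
        have a1: "(1+\<epsilon>)*(W'+\<epsilon>) = W' + \<epsilon> * (W' + 1 + \<epsilon>)" by (simp add: algebra_simps)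
        have a2: "\<epsilon> * (W' + 1 + \<epsilon>) \<le> \<epsilon> * (W' + 2)" using \<epsilon>1 \<epsilon>0 by (intro mult_left_mono) auto
        have a3: "\<epsilon> * (W'+2) \<le> e" using \<epsilon>2 W' by (simp add: pos_le_divide_eq mult.commute)
        show ?thesis using a1 a2 a3 by linarith
      qed
      have "Np p cl F \<le> Np p (\<lambda>\<pi>. ennreal (1+\<epsilon>) * cn (rs n) \<pi>) F" using n1 by (intro N_mono[OF p]) auto
      also have "\<dots> = ennreal (1+\<epsilon>) * Np p (cn (rs n)) F" using \<epsilon>0 by (intro N_scale[OF p]) simp
      also have "\<dots> \<le> ennreal (1+\<epsilon>) * (ennreal W' + ennreal \<epsilon>)" by (rule mult_left_mono[OF X]) simp
      also have "\<dots> = ennreal ((1+\<epsilon>)*(W'+\<epsilon>))" by (simp only: e1 e2)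
      also have "\<dots> \<le> ennreal (W' + e)" using R by (rule ennreal_leI)
      also have "\<dots> = Wv + ennreal e" using W' e by (simp add: ennreal_plus)
      finally show "Np p cl F \<le> Wv + ennreal e" .
    qed
  qed

  have fin_i: "setdist_e d (x i) A < \<infinity>" if "i \<in> I - K" for i
  proof -
    have "cl (Inl i) = setdist_e d (x i) A" using that by (simp add: cl_def cc_def)
    moreover have "cl (Inl i) \<le> Np p cl PP" using that by (intro N_ge[OF p]) (auto simp: PP_def)
    ultimately show ?thesis using clW Wfin by (simp add: Wv_def)
  qed
  have fin_j: "setdist_e d (y j) A < \<infinity>" if "j \<in> J - \<phi> ` K" for j
  proof -
    have "cl (Inr j) = setdist_e d (y j) A" using that by (simp add: cl_def cc_def)
    moreover have "cl (Inr j) \<le> Np p cl PP" using that by (intro N_ge[OF p]) (auto simp: PP_def)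
    ultimately show ?thesis using clW Wfin by (simp add: Wv_def)
  qed
  define z where "z i = near d A (x i)" for i
  define w where "w j = near d A (y j)" for j
  have zA: "z i \<in> A \<and> d (x i) (z i) = setdist_e d (x i) A" if "i \<in> I - K" for i
    unfolding z_def by (rule near[OF dm fin_i[OF that]])
  have wA: "w j \<in> A \<and> d (y j) (w j) = setdist_e d (y j) A" if "j \<in> J - \<phi> ` K" for j
    unfolding w_def by (rule near[OF dm fin_j[OF that]])
  have im: "is_matching A (I,x) (J,y) (K,\<phi>,z,w)"
    unfolding is_matching_def using KI injK KJ zA wA by auto
  have nz: "\<forall>i\<in>I-K. d (x i) (z i) = setdist_e d (x i) A" using zA by blast
  have nw: "\<forall>j\<in>J-\<phi>`K. d (w j) (y j) = setdist_e d (y j) A" using wA metric_onD(2)[OF md] by metis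
  have "pcost d p (I,x) (J,y) (K,\<phi>,z,w) \<le> Np p cl PP"
    unfolding cl_def PP_def by (rule cc_sigma(2)[OF p md im nz nw])
  also have "\<dots> \<le> Wv" by (rule clW)
  finally show ?thesis using im nz nw unfolding Wv_def by blast
qed

lemma improve:
  assumes md: "metric_on d" and dm: "dist_minimizing d A" and im: "is_matching A (I,x) (J,y) (K,\<phi>,z,w)"
    and pc: "pcost d \<infinity> (I,x) (J,y) (K,\<phi>,z,w) < \<infinity>"
  shows "\<exists>K' z' w'. is_matching A (I,x) (J,y) (K',\<phi>,z',w') \<and> pcost d \<infinity> (I,x) (J,y) (K',\<phi>,z',w') \<le> pcost d \<infinity> (I,x) (J,y) (K,\<phi>,z,w)
     \<and> (\<forall>i\<in>K'. d (x i) (y (\<phi> i)) \<le> max (setdist_e d (x i) A) (setdist_e d (y (\<phi> i)) A))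
     \<and> (\<forall>i\<in>I-K'. d (x i) (z' i) = setdist_e d (x i) A) \<and> (\<forall>j\<in>J-\<phi>`K'. d (w' j) (y j) = setdist_e d (y j) A)"
proof -
  have KI: "K \<subseteq> I" and inj: "inj_on \<phi> K" and KJ: "\<phi> ` K \<subseteq> J" and zA: "\<And>i. i \<in> I - K \<Longrightarrow> z i \<in> A"
    and wA: "\<And>j. j \<in> J - \<phi> ` K \<Longrightarrow> w j \<in> A"
    using im by (auto simp: is_matching_def)
  define C where "C = pcost d \<infinity> (I,x) (J,y) (K,\<phi>,z,w)"
  define E where "E = (\<lambda>\<pi>. case \<pi> of Inl i \<Rightarrow> (if i\<in>K then d (x i) (y (\<phi> i)) else d (x i) (z i)) | Inr j \<Rightarrow> d (w j) (y j))"
  have CE: "C = Np \<infinity> E (Inl ` I \<union> Inr ` (J - \<phi> ` K))" unfolding C_def E_def by (rule pcost_N[OF KI])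
  have Ele: "E \<tau> \<le> C" if "\<tau> \<in> Inl ` I \<union> Inr ` (J - \<phi> ` K)" for \<tau>
    unfolding CE by (rule N_ge) (use that in auto)
  define K' where "K' = {i\<in>K. d (x i) (y (\<phi> i)) \<le> max (setdist_e d (x i) A) (setdist_e d (y (\<phi> i)) A)}"
  define z' where "z' i = near d A (x i)" for i
  define w' where "w' j = near d A (y j)" for j
  have ri: "setdist_e d (x i) A \<le> C" if "i \<in> I - K'" for i
  proof (cases "i \<in> K")
    case True
    then have "d (x i) (y (\<phi> i)) > setdist_e d (x i) A" using that by (auto simp: K'_def not_le)
    moreover have "E (Inl i) \<le> C" using that by (intro Ele) auto
    ultimately show ?thesis using True by (simp add: E_def)
  next
    case False
    have "E (Inl i) \<le> C" using that by (intro Ele) auto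
    then show ?thesis using False zA[of i] that sd_le[of "z i" A d "x i"] by (simp add: E_def)
  qed
  have rj: "setdist_e d (y j) A \<le> C" if "j \<in> J - \<phi> ` K'" for j
  proof (cases "j \<in> \<phi> ` K")
    case True
    then obtain i where i: "i \<in> K" "j = \<phi> i" by auto
    then have "i \<notin> K'" using that by auto
    then have "d (x i) (y (\<phi> i)) > setdist_e d (y j) A" using i by (auto simp: K'_def not_le)
    moreover have "E (Inl i) \<le> C" using i KI by (intro Ele) auto
    ultimately show ?thesis using i by (simp add: E_def)
  next
    case False
    have "E (Inr j) \<le> C" using that False by (intro Ele) auto
    then show ?thesis using False wA[of j] that sd_le[of "w j" A d "y j"] metric_onD(2)[OF md, of "w j" "y j"]
      by (simp add: E_def)
  qed
  have Cfin: "C < \<infinity>" using pc by (simp add: C_def)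
  have z'A: "z' i \<in> A \<and> d (x i) (z' i) = setdist_e d (x i) A" if "i \<in> I - K'" for i
    unfolding z'_def by (rule near[OF dm]) (use ri[OF that] Cfin in simp)
  have w'A: "w' j \<in> A \<and> d (y j) (w' j) = setdist_e d (y j) A" if "j \<in> J - \<phi> ` K'" for j
    unfolding w'_def by (rule near[OF dm]) (use rj[OF that] Cfin in simp)
  have K'K: "K' \<subseteq> K" by (auto simp: K'_def)
  have im': "is_matching A (I,x) (J,y) (K',\<phi>,z',w')"
    unfolding is_matching_def using K'K KI inj_on_subset[OF inj K'K] KJ z'A w'A by auto
  have nz: "\<forall>i\<in>I-K'. d (x i) (z' i) = setdist_e d (x i) A" using z'A by blast
  have nw: "\<forall>j\<in>J-\<phi>`K'. d (w' j) (y j) = setdist_e d (y j) A" using w'A metric_onD(2)[OF md] by metis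
  define E' where "E' = (\<lambda>\<pi>. case \<pi> of Inl i \<Rightarrow> (if i\<in>K' then d (x i) (y (\<phi> i)) else d (x i) (z' i)) | Inr j \<Rightarrow> d (w' j) (y j))"
  have "pcost d \<infinity> (I,x) (J,y) (K',\<phi>,z',w') = Np \<infinity> E' (Inl ` I \<union> Inr ` (J - \<phi> ` K'))"
    unfolding E'_def by (rule pcost_N) (use K'K KI in auto)
  also have "\<dots> \<le> C"
    unfolding Np_def
  proof (simp, intro SUP_least)
    fix \<tau> assume t: "\<tau> \<in> Inl ` I \<union> Inr ` (J - \<phi> ` K')"
    show "E' \<tau> \<le> C"
    proof (cases \<tau>)
      case (Inl i)
      then have iI: "i \<in> I" using t by auto
      show ?thesis
      proof (cases "i \<in> K'")
        case True
        then have "E (Inl i) \<le> C" using iI by (intro Ele) auto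
        then show ?thesis using True K'K Inl by (auto simp: E_def E'_def)
      next
        case False
        then show ?thesis using Inl iI ri z'A by (simp add: E'_def)
      qed
    next
      case (Inr j)
      then have "j \<in> J - \<phi> ` K'" using t by auto
      then show ?thesis using Inr rj nw by (simp add: E'_def)
    qed
  qed
  finally have "pcost d \<infinity> (I,x) (J,y) (K',\<phi>,z',w') \<le> pcost d \<infinity> (I,x) (J,y) (K,\<phi>,z,w)" by (simp add: C_def)
  moreover have "\<forall>i\<in>K'. d (x i) (y (\<phi> i)) \<le> max (setdist_e d (x i) A) (setdist_e d (y (\<phi> i)) A)"
    by (simp add: K'_def)
  ultimately show ?thesis using im' nz nw
    by (intro exI[of _ K'] exI[of _ z'] exI[of _ w'] conjI) auto
qed

lemma good_matching:
  assumes mp: "metric_pair d A" and dm: "dist_minimizing d A" and p: "1 \<le> p"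
    and a: "(I,x) \<in> Dbar d A p" and b: "(J,y) \<in> Dbar d A p"
    and Wfin: "Wp d A p (I,x) (J,y) < \<infinity>"
  shows "\<exists>K \<phi> z w. is_matching A (I,x) (J,y) (K,\<phi>,z,w) \<and> pcost d p (I,x) (J,y) (K,\<phi>,z,w) \<le> Wp d A p (I,x) (J,y)
     \<and> (\<forall>i\<in>I-K. d (x i) (z i) = setdist_e d (x i) A) \<and> (\<forall>j\<in>J-\<phi>`K. d (w j) (y j) = setdist_e d (y j) A)
     \<and> (p = \<infinity> \<longrightarrow> (\<forall>i\<in>K. d (x i) (y (\<phi> i)) \<le> max (setdist_e d (x i) A) (setdist_e d (y (\<phi> i)) A)))"
proof -
  have md: "metric_on d" using mp by (simp add: metric_pair_def)
  obtain K \<phi> z w where m: "is_matching A (I,x) (J,y) (K,\<phi>,z,w)" "pcost d p (I,x) (J,y) (K,\<phi>,z,w) \<le> Wp d A p (I,x) (J,y)"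
     "\<forall>i\<in>I-K. d (x i) (z i) = setdist_e d (x i) A" "\<forall>j\<in>J-\<phi>`K. d (w j) (y j) = setdist_e d (y j) A"
    using opt_exists[OF mp dm p a b Wfin] by blast
  show ?thesis
  proof (cases "p = \<infinity>")
    case False then show ?thesis using m by (intro exI[of _ K] exI[of _ \<phi>] exI[of _ z] exI[of _ w] conjI) auto
  next
    case True
    have "pcost d \<infinity> (I,x) (J,y) (K,\<phi>,z,w) < \<infinity>" using m(2) Wfin True by simp
    then obtain K' z' w' where h: "is_matching A (I,x) (J,y) (K',\<phi>,z',w')" "pcost d \<infinity> (I,x) (J,y) (K',\<phi>,z',w') \<le> pcost d \<infinity> (I,x) (J,y) (K,\<phi>,z,w)"
     "(\<forall>i\<in>K'. d (x i) (y (\<phi> i)) \<le> max (setdist_e d (x i) A) (setdist_e d (y (\<phi> i)) A))"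
     "(\<forall>i\<in>I-K'. d (x i) (z' i) = setdist_e d (x i) A)" "(\<forall>j\<in>J-\<phi>`K'. d (w' j) (y j) = setdist_e d (y j) A)"
      using improve[OF md dm m(1)[unfolded True]] True by blast
    have "pcost d p (I,x) (J,y) (K',\<phi>,z',w') \<le> Wp d A p (I,x) (J,y)" using order_trans[OF h(2)] m(2) True by simp
    then show ?thesis using h True by (intro exI[of _ K'] exI[of _ \<phi>] exI[of _ z'] exI[of _ w'] conjI) auto
  qed
qed

lemma part_mono:
  assumes "\<forall>k<n. tt k \<le> tt (Suc k)" "k \<le> l" "l \<le> n"
  shows "tt k \<le> (tt l :: real)"
  using assms(2,3)
proof (induction l)
  case 0 then show ?case by simp
next
  case (Suc l)
  show ?case
  proof (cases "k = Suc l")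
    case True then show ?thesis by simp
  next
    case False
    then have "tt k \<le> tt l" using Suc by simp
    also have "tt l \<le> tt (Suc l)" using assms(1) Suc by simp
    finally show ?thesis .
  qed
qed

lemma part_bounds:
  assumes "(n, tt) \<in> partitions01" "k \<le> n"
  shows "0 \<le> tt k \<and> tt k \<le> 1"
proof -
  have h: "tt 0 = 0" "tt n = 1" "\<forall>k<n. tt k \<le> tt (Suc k)" using assms(1) by (auto simp: partitions01_def)
  show ?thesis using part_mono[OF h(3), of 0 k] part_mono[OF h(3), of k n] assms(2) h(1,2) by simp
qed

lemma tele:
  fixes tt :: "nat \<Rightarrow> real" and n :: nat
  shows "(\<Sum>k\<in>{1..n}. (tt k - tt (k - 1))) = tt n - tt 0"
  by (induction n) (auto simp: sum.cl_ivl_Suc)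

lemma path_length_le:
  assumes lip: "\<And>s t. s \<in> {0..1} \<Longrightarrow> t \<in> {0..1} \<Longrightarrow> D (\<gamma> s) (\<gamma> t) \<le> ennreal \<bar>s - t\<bar> * W"
  shows "path_length D \<gamma> \<le> W"
  unfolding path_length_def
proof (rule SUP_least)
  fix P assume P: "P \<in> partitions01"
  obtain n tt where Pe: "P = (n, tt)" by (cases P)
  have Pn: "(n, tt) \<in> partitions01" using P Pe by simp
  have h: "tt 0 = 0" "tt n = 1" "\<forall>k<n. tt k \<le> tt (Suc k)" using Pn by (auto simp: partitions01_def)
  have "(\<Sum>k\<in>{1..n}. D (\<gamma> (tt (k - 1))) (\<gamma> (tt k))) \<le> (\<Sum>k\<in>{1..n}. ennreal (tt k - tt (k - 1)) * W)"
  proof (rule sum_mono)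
    fix k assume k: "k \<in> {1..n}"
    have b1: "tt (k-1) \<in> {0..1}" "tt k \<in> {0..1}" using part_bounds[OF Pn, of "k-1"] part_bounds[OF Pn, of k] k by auto
    have "tt (k - 1) \<le> tt k" using h(3) k by (metis Suc_diff_1 atLeastAtMost_iff diff_less less_le_trans zero_less_one le_numeral_extra(4) not_one_le_zero)
    then have "\<bar>tt (k - 1) - tt k\<bar> = tt k - tt (k - 1)" by simp
    then show "D (\<gamma> (tt (k - 1))) (\<gamma> (tt k)) \<le> ennreal (tt k - tt (k - 1)) * W"
      using lip[OF b1] by simp
  qed
  also have "\<dots> = (\<Sum>k\<in>{1..n}. ennreal (tt k - tt (k - 1))) * W" by (simp add: sum_distrib_right)
  also have "(\<Sum>k\<in>{1..n}. ennreal (tt k - tt (k - 1))) = ennreal (\<Sum>k\<in>{1..n}. (tt k - tt (k - 1)))"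
  proof (rule sum_ennreal)
    fix k assume k: "k \<in> {1..n}"
    have "tt (k - 1) \<le> tt k" using part_mono[OF h(3), of "k-1" k] k by simp
    then show "0 \<le> tt k - tt (k - 1)" by simp
  qed
  also have "(\<Sum>k\<in>{1..n}. (tt k - tt (k - 1))) = 1" using tele[where n=n and tt=tt] h by simp
  finally show "(\<Sum>k\<in>{1..fst P}. D (\<gamma> (snd P (k - 1))) (\<gamma> (snd P k))) \<le> W" using Pe by simp
qed

lemma path_length_ge: "D (\<gamma> 0) (\<gamma> 1) \<le> path_length D \<gamma>"
proof -
  define tt where "tt k = (if k = 0 then 0 else (1::real))" for k :: nat
  have P: "(1, tt) \<in> partitions01" by (simp add: partitions01_def tt_def)
  have "(\<Sum>k\<in>{1..fst (1::nat, tt)}. D (\<gamma> (snd (1::nat, tt) (k - 1))) (\<gamma> (snd (1::nat, tt) k))) = D (\<gamma> 0) (\<gamma> 1)"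
    by (simp add: tt_def)
  moreover have "(\<Sum>k\<in>{1..fst (1::nat, tt)}. D (\<gamma> (snd (1::nat, tt) (k - 1))) (\<gamma> (snd (1::nat, tt) k))) \<le> path_length D \<gamma>"
    unfolding path_length_def by (rule SUP_upper[OF P])
  ultimately show ?thesis by simp
qed

lemma path_cont_lip:
  assumes Wf: "W < \<infinity>" and lip: "\<And>s t. s \<in> {0..1} \<Longrightarrow> t \<in> {0..1} \<Longrightarrow> D (\<gamma> s) (\<gamma> t) \<le> ennreal \<bar>s - t\<bar> * W"
  shows "path_cont D \<gamma>"
  unfolding path_cont_def
proof (intro ballI allI impI)
  fix t e :: real assume t: "t \<in> {0..1}" and e: "0 < e"
  obtain W' where W': "W = ennreal W'" "W' \<ge> 0" using Wf by (cases W rule: ennreal_cases) auto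
  define \<delta> where "\<delta> = e / (W' + 1)"
  have \<delta>0: "\<delta> > 0" using e W' by (simp add: \<delta>_def)
  show "\<exists>\<delta>>0. \<forall>s\<in>{0..1}. \<bar>s - t\<bar> < \<delta> \<longrightarrow> D (\<gamma> s) (\<gamma> t) < ennreal e"
  proof (intro exI[of _ \<delta>] conjI ballI impI \<delta>0)
    fix s assume s: "s \<in> {0..1}" and st: "\<bar>s - t\<bar> < \<delta>"
    have "\<bar>s - t\<bar> * W' \<le> \<delta> * W'" using st W' by (intro mult_right_mono) auto
    also have "\<delta> * W' < e" using e W' by (simp add: \<delta>_def field_simps)
    finally have r: "\<bar>s - t\<bar> * W' < e" .
    have "D (\<gamma> s) (\<gamma> t) \<le> ennreal \<bar>s - t\<bar> * ennreal W'" using lip[OF s t] W' by simp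
    also have "\<dots> = ennreal (\<bar>s - t\<bar> * W')" using W' by (simp add: ennreal_mult)
    also have "\<dots> < ennreal e" by (rule ennreal_lessI[OF e r])
    finally show "D (\<gamma> s) (\<gamma> t) < ennreal e" .
  qed
qed

lemma enn_add_lt2: "(a::ennreal) < ennreal c \<Longrightarrow> b < ennreal c \<Longrightarrow> a + b < ennreal (2*c)"
proof -
  assume h: "a < ennreal c" "b < ennreal c"
  obtain a' where a': "a = ennreal a'" "a' \<ge> 0" using h(1) by (cases a rule: ennreal_cases) auto
  obtain b' where b': "b = ennreal b'" "b' \<ge> 0" using h(2) by (cases b rule: ennreal_cases) auto
  have "a' < c" "b' < c" using h a' b' by (auto simp: ennreal_less_iff)
  then have "a' + b' < 2 * c" by simp
  moreover have "a + b = ennreal (a' + b')" using a' b' by (simp add: ennreal_plus)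
  moreover have "ennreal (a' + b') < ennreal (2*c)"
    by (rule ennreal_lessI) (use calculation a' b' in auto)
  ultimately show ?thesis by simp
qed

lemma powbound:
  assumes q: "q > 0"
  shows "enn_powr (a + b) q \<le> ennreal (2 powr q) * (enn_powr a q + enn_powr b q)"
proof -
  have "a + b \<le> ennreal 2 * max a b"
    by (cases "a \<le> b") (auto simp: max_def mult_2 add_mono)
  then have "enn_powr (a + b) q \<le> enn_powr (ennreal 2 * max a b) q" using q by (intro ep_mono) auto
  also have "\<dots> = ennreal (2 powr q) * enn_powr (max a b) q" using q ep_mult[of 2 q "max a b"] by simp
  also have "enn_powr (max a b) q \<le> enn_powr a q + enn_powr b q"
    by (cases "a \<le> b") (auto simp: max_def add_increasing add_increasing2)
  then have "ennreal (2 powr q) * enn_powr (max a b) q \<le> ennreal (2 powr q) * (enn_powr a q + enn_powr b q)"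
    by (rule mult_left_mono) simp
  finally show ?thesis .
qed

lemma path_exists:
  assumes mp: "metric_pair d A" and dm: "dist_minimizing d A" and gs: "geodesic_space UNIV d" and p: "1 \<le> p"
    and a: "(I,x) \<in> Dbar d A p" and b: "(J,y) \<in> Dbar d A p" and Wfin: "Wp d A p (I,x) (J,y) < \<infinity>"
  shows "\<exists>\<gamma>. \<gamma> ` {0..1} \<subseteq> Dbar d A p \<and> \<gamma> 0 = (I,x) \<and> \<gamma> 1 = (J,y) \<and> path_cont (Wp d A p) \<gamma>
     \<and> path_length (Wp d A p) \<gamma> = Wp d A p (I,x) (J,y) \<and> (finite I \<longrightarrow> finite J \<longrightarrow> \<gamma> ` {0..1} \<subseteq> Dfin A)"
proof -
  have md: "metric_on d" and mc: "mclosed d A" using mp by (auto simp: metric_pair_def)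
  have fsa: "(I,x) \<in> fsums A" and fsb: "(J,y) \<in> fsums A" using a b by (auto simp: Dbar_def split: if_splits)
  have fsx: "x i \<notin> A" if "i \<in> I" for i using fsa that by (auto simp: fsums_def)
  have fsy: "y j \<notin> A" if "j \<in> J" for j using fsb that by (auto simp: fsums_def)
  define W where "W = Wp d A p (I,x) (J,y)"
  obtain K \<phi> z w where im: "is_matching A (I,x) (J,y) (K,\<phi>,z,w)" and pcW: "pcost d p (I,x) (J,y) (K,\<phi>,z,w) \<le> W"
     and nz: "\<forall>i\<in>I-K. d (x i) (z i) = setdist_e d (x i) A" and nw: "\<forall>j\<in>J-\<phi>`K. d (w j) (y j) = setdist_e d (y j) A"
     and pinf: "p = \<infinity> \<longrightarrow> (\<forall>i\<in>K. d (x i) (y (\<phi> i)) \<le> max (setdist_e d (x i) A) (setdist_e d (y (\<phi> i)) A))"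
    using good_matching[OF mp dm p a b Wfin] unfolding W_def by blast
  have KI: "K \<subseteq> I" and inj: "inj_on \<phi> K" and KJ: "\<phi> ` K \<subseteq> J" and zA: "\<And>i. i \<in> I - K \<Longrightarrow> z i \<in> A"
    and wA: "\<And>j. j \<in> J - \<phi> ` K \<Longrightarrow> w j \<in> A"
    using im by (auto simp: is_matching_def)
  define T where "T = Inl ` I \<union> Inr ` (J - \<phi> ` K)"
  define aa where "aa \<tau> = (case \<tau> of Inl i \<Rightarrow> x i | Inr j \<Rightarrow> w j)" for \<tau>
  define bb where "bb \<tau> = (case \<tau> of Inl i \<Rightarrow> (if i \<in> K then y (\<phi> i) else z i) | Inr j \<Rightarrow> y j)" for \<tau>
  define L where "L \<tau> = d (aa \<tau>) (bb \<tau>)" for \<tau>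
  have pcL: "pcost d p (I,x) (J,y) (K,\<phi>,z,w) = Np p L T"
  proof -
    have "pcost d p (I,x) (J,y) (K,\<phi>,z,w) = Np p (\<lambda>\<pi>. case \<pi> of Inl i \<Rightarrow> (if i\<in>K then d (x i) (y (\<phi> i)) else d (x i) (z i)) | Inr j \<Rightarrow> d (w j) (y j)) T"
      unfolding T_def by (rule pcost_N[OF KI])
    also have "\<dots> = Np p L T" by (rule N_cong) (auto simp: L_def aa_def bb_def split: sum.splits)
    finally show ?thesis .
  qed
  have NL: "Np p L T \<le> W" using pcW pcL by simp
  have Wf: "W < \<infinity>" using Wfin by (simp add: W_def)
  have Lfin: "L \<tau> < \<infinity>" if "\<tau> \<in> T" for \<tau>
    using N_ge[OF p that, of L] NL Wf by simp
  define H where "H \<tau> = (SOME h. h 0 = aa \<tau> \<and> h 1 = bb \<tau> \<and> (\<forall>s\<in>{0..1}. \<forall>t\<in>{0..1}. d (h s) (h t) = ennreal (\<bar>s - t\<bar> * enn2real (d (aa \<tau>) (bb \<tau>)))))" for \<tau>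
  have HP: "H \<tau> 0 = aa \<tau> \<and> H \<tau> 1 = bb \<tau> \<and> (\<forall>s\<in>{0..1}. \<forall>t\<in>{0..1}. d (H \<tau> s) (H \<tau> t) = ennreal (\<bar>s - t\<bar> * enn2real (d (aa \<tau>) (bb \<tau>))))" if "\<tau> \<in> T" for \<tau>
    unfolding H_def by (rule someI_ex[OF geo_points[OF md gs]]) (use Lfin[OF that] in \<open>simp add: L_def\<close>)
  have H0: "H \<tau> 0 = aa \<tau>" and H1: "H \<tau> 1 = bb \<tau>" if "\<tau> \<in> T" for \<tau> using HP[OF that] by auto
  have dH: "d (H \<tau> s) (H \<tau> t) = ennreal \<bar>s - t\<bar> * L \<tau>" if "\<tau> \<in> T" "s \<in> {0..1}" "t \<in> {0..1}" for \<tau> s t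
  proof -
    have "d (H \<tau> s) (H \<tau> t) = ennreal (\<bar>s - t\<bar> * enn2real (L \<tau>))" using HP[OF that(1)] that(2,3) by (simp add: L_def)
    also have "\<dots> = ennreal \<bar>s - t\<bar> * ennreal (enn2real (L \<tau>))" by (simp add: ennreal_mult)
    also have "ennreal (enn2real (L \<tau>)) = L \<tau>" using Lfin[OF that(1)] by simp
    finally show ?thesis .
  qed
  define enc :: "nat + nat \<Rightarrow> nat" where "enc \<tau> = (case \<tau> of Inl i \<Rightarrow> 2*i | Inr j \<Rightarrow> 2*j+1)" for \<tau>
  define dec :: "nat \<Rightarrow> nat + nat" where "dec n = (if even n then Inl (n div 2) else Inr (n div 2))" for n
  have decenc: "dec (enc \<tau>) = \<tau>" for \<tau> by (cases \<tau>) (auto simp: enc_def dec_def)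
  have encinj: "enc \<tau> = enc \<tau>' \<Longrightarrow> \<tau> = \<tau>'" for \<tau> \<tau>' by (metis decenc)
  define mid where "mid t = (enc ` {\<tau>\<in>T. H \<tau> t \<notin> A}, \<lambda>n. H (dec n) t)" for t
  define \<gamma> where "\<gamma> t = (if t = 0 then (I,x) else if t = 1 then (J,y) else mid t)" for t
  have rep: "\<exists>e. rep A T (\<gamma> s) (\<lambda>\<tau>. H \<tau> s) e" if s: "s \<in> {0..1}" for s
  proof -
    consider (z) "s = 0" | (o) "s = 1" | (m) "s \<noteq> 0" "s \<noteq> 1" by blast
    then show ?thesis
    proof cases
      case z
      define e where "e \<tau> = (case \<tau> of Inl i \<Rightarrow> Some i | Inr j \<Rightarrow> None)" for \<tau> :: "nat + nat"
      have g: "\<gamma> s = (I,x)" using z by (simp add: \<gamma>_def)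
      have c1: "\<forall>\<tau>\<in>T. (e \<tau> = None \<longrightarrow> H \<tau> s \<in> A) \<and> (\<forall>n. e \<tau> = Some n \<longrightarrow> n \<in> I \<and> x n = H \<tau> s)"
      proof
        fix \<tau> assume t: "\<tau> \<in> T"
        show "(e \<tau> = None \<longrightarrow> H \<tau> s \<in> A) \<and> (\<forall>n. e \<tau> = Some n \<longrightarrow> n \<in> I \<and> x n = H \<tau> s)"
          using t H0[OF t] wA z by (auto simp: T_def e_def aa_def)
      qed
      have c2: "\<forall>\<tau>\<in>T. \<forall>\<tau>'\<in>T. \<forall>n. e \<tau> = Some n \<longrightarrow> e \<tau>' = Some n \<longrightarrow> \<tau> = \<tau>'"
        by (auto simp: T_def e_def)
      have c3: "\<forall>n\<in>I. \<exists>\<tau>\<in>T. e \<tau> = Some n"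
        by (auto simp: T_def e_def intro!: bexI[of _ "Inl _"])
      show ?thesis using c1 c2 c3 g by (intro exI[of _ e]) (simp add: rep_def)
    next
      case o
      define e where "e \<tau> = (case \<tau> of Inl i \<Rightarrow> (if i \<in> K then Some (\<phi> i) else None) | Inr j \<Rightarrow> Some j)" for \<tau> :: "nat + nat"
      have g: "\<gamma> s = (J,y)" using o by (simp add: \<gamma>_def)
      have c1: "\<forall>\<tau>\<in>T. (e \<tau> = None \<longrightarrow> H \<tau> s \<in> A) \<and> (\<forall>n. e \<tau> = Some n \<longrightarrow> n \<in> J \<and> y n = H \<tau> s)"
      proof
        fix \<tau> assume t: "\<tau> \<in> T"
        show "(e \<tau> = None \<longrightarrow> H \<tau> s \<in> A) \<and> (\<forall>n. e \<tau> = Some n \<longrightarrow> n \<in> J \<and> y n = H \<tau> s)"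
          using t H1[OF t] zA KJ o by (auto simp: T_def e_def bb_def image_subset_iff split: if_splits)
      qed
      have c2: "\<forall>\<tau>\<in>T. \<forall>\<tau>'\<in>T. \<forall>n. e \<tau> = Some n \<longrightarrow> e \<tau>' = Some n \<longrightarrow> \<tau> = \<tau>'"
        using inj by (auto simp: T_def e_def split: if_splits dest: inj_onD)
      have c3: "\<forall>n\<in>J. \<exists>\<tau>\<in>T. e \<tau> = Some n"
      proof
        fix n assume n: "n \<in> J"
        show "\<exists>\<tau>\<in>T. e \<tau> = Some n"
        proof (cases "n \<in> \<phi> ` K")
          case True
          then obtain i where "i \<in> K" "n = \<phi> i" by auto
          then show ?thesis using KI by (intro bexI[of _ "Inl i"]) (auto simp: T_def e_def)
        next
          case False
          then show ?thesis using n by (intro bexI[of _ "Inr n"]) (auto simp: T_def e_def)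
        qed
      qed
      show ?thesis using c1 c2 c3 g by (intro exI[of _ e]) (simp add: rep_def)
    next
      case m
      define e where "e \<tau> = (if H \<tau> s \<in> A then None else Some (enc \<tau>))" for \<tau>
      have g: "\<gamma> s = mid s" using m by (simp add: \<gamma>_def)
      have "rep A T (mid s) (\<lambda>\<tau>. H \<tau> s) e"
        unfolding rep_def mid_def using decenc encinj
        by (auto simp: e_def split: if_splits)
      then show ?thesis using g by auto
    qed
  qed

  have lip: "Wp d A p (\<gamma> s) (\<gamma> t) \<le> ennreal \<bar>s - t\<bar> * W" if s: "s \<in> {0..1}" and t: "t \<in> {0..1}" for s t
  proof -
    obtain e1 where e1: "rep A T (\<gamma> s) (\<lambda>\<tau>. H \<tau> s) e1" using rep[OF s] by blast
    obtain e2 where e2: "rep A T (\<gamma> t) (\<lambda>\<tau>. H \<tau> t) e2" using rep[OF t] by blast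
    have "Wp d A p (\<gamma> s) (\<gamma> t) = Wp d A p (fst (\<gamma> s), snd (\<gamma> s)) (fst (\<gamma> t), snd (\<gamma> t))" by simp
    also have "\<dots> \<le> Np p (\<lambda>\<tau>. d (H \<tau> s) (H \<tau> t)) T" by (rule key[OF p]) (use e1 e2 in simp_all)
    also have "\<dots> = Np p (\<lambda>\<tau>. ennreal \<bar>s - t\<bar> * L \<tau>) T" by (rule N_cong) (rule dH[OF _ s t])
    also have "\<dots> = ennreal \<bar>s - t\<bar> * Np p L T" by (rule N_scale[OF p]) simp
    also have "\<dots> \<le> ennreal \<bar>s - t\<bar> * W" by (rule mult_left_mono[OF NL]) simp
    finally show ?thesis .
  qed

  have memb: "\<gamma> t \<in> Dbar d A p" if "t \<in> {0..1}" for t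
  proof -
    have midfs: "mid t \<in> fsums A" for t using decenc by (auto simp: mid_def fsums_def)
    have rb: "setdist_e d (H \<tau> t) A \<le> setdist_e d (aa \<tau>) A + L \<tau>" if "\<tau> \<in> T" "t \<in> {0..1}" for \<tau> t
    proof -
      have "setdist_e d (H \<tau> t) A \<le> d (H \<tau> t) (aa \<tau>) + setdist_e d (aa \<tau>) A" by (rule sd_tri[OF md])
      also have "d (H \<tau> t) (aa \<tau>) = ennreal t * L \<tau>" using dH[OF that(1) that(2), of 0] H0[OF that(1)] that by simp
      also have "ennreal t * L \<tau> \<le> L \<tau>" using that(2) mult_right_mono[of "ennreal t" 1 "L \<tau>"] by simp
      finally show ?thesis by (simp add: add.commute add_right_mono)
    qed
    have raaInr: "setdist_e d (aa (Inr j)) A = 0" if "Inr j \<in> T" for j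
      using that wA sd_in[OF md] by (auto simp: T_def aa_def)
    have midD: "mid t \<in> Dbar d A p" if tt: "t \<in> {0..1}" for t
    proof (cases "p = \<infinity>")
      case True
      have pL: "L \<tau> \<le> max (setdist_e d (aa \<tau>) A) (setdist_e d (bb \<tau>) A)" if "\<tau> \<in> T" for \<tau>
      proof (cases \<tau>)
        case (Inl i)
        then have iI: "i \<in> I" using that by (auto simp: T_def)
        show ?thesis
        proof (cases "i \<in> K")
          case True
          then show ?thesis using pinf \<open>p = \<infinity>\<close> Inl by (simp add: L_def aa_def bb_def)
        next
          case False
          then show ?thesis using nz iI Inl by (simp add: L_def aa_def bb_def)
        qed
      next
        case (Inr j)
        then have "j \<in> J - \<phi> ` K" using that by (auto simp: T_def)
        then show ?thesis using nw Inr by (simp add: L_def aa_def bb_def)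
      qed
      have fin': "finite {\<tau>\<in>T. ennreal \<delta>' \<le> setdist_e d (H \<tau> t) A}" if \<delta>': "\<delta>' > 0" for \<delta>'
      proof -
        define c where "c = \<delta>' / 2"
        have c0: "c > 0" using \<delta>' by (simp add: c_def)
        define S1 where "S1 = (Inl ` {i\<in>I. ennreal c \<le> setdist_e d (x i) A} :: (nat + nat) set)"
        define S2 where "S2 = (Inl ` (\<phi> -` {j\<in>J. ennreal c \<le> setdist_e d (y j) A} \<inter> K) :: (nat + nat) set)"
        define S3 where "S3 = (Inr ` {j\<in>J. ennreal c \<le> setdist_e d (y j) A} :: (nat + nat) set)"
        have sub: "{\<tau>\<in>T. ennreal \<delta>' \<le> setdist_e d (H \<tau> t) A} \<subseteq> S1 \<union> S2 \<union> S3"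
        proof
          fix \<tau> assume "\<tau> \<in> {\<tau>\<in>T. ennreal \<delta>' \<le> setdist_e d (H \<tau> t) A}"
          then have \<tau>T: "\<tau> \<in> T" and big: "ennreal \<delta>' \<le> setdist_e d (H \<tau> t) A" by auto
          have nb: "\<not> (setdist_e d (aa \<tau>) A < ennreal c \<and> setdist_e d (bb \<tau>) A < ennreal c)"
          proof
            assume h: "setdist_e d (aa \<tau>) A < ennreal c \<and> setdist_e d (bb \<tau>) A < ennreal c"
            then have "max (setdist_e d (aa \<tau>) A) (setdist_e d (bb \<tau>) A) < ennreal c" by simp
            then have "L \<tau> < ennreal c" using pL[OF \<tau>T] by (rule le_less_trans[rotated])
            then have "setdist_e d (aa \<tau>) A + L \<tau> < ennreal (2*c)" using h by (intro enn_add_lt2) auto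
            then have "setdist_e d (H \<tau> t) A < ennreal \<delta>'" using rb[OF \<tau>T tt] by (simp add: c_def)
            then show False using big by simp
          qed
          show "\<tau> \<in> S1 \<union> S2 \<union> S3"
          proof (cases \<tau>)
            case (Inl i)
            then have iI: "i \<in> I" using \<tau>T by (auto simp: T_def)
            show ?thesis
            proof (cases "ennreal c \<le> setdist_e d (x i) A")
              case True then show ?thesis using iI Inl by (auto simp: S1_def)
            next
              case False
              then have bbc: "ennreal c \<le> setdist_e d (bb \<tau>) A" using nb Inl by (auto simp: aa_def not_le)
              show ?thesis
              proof (cases "i \<in> K")
                case True
                then have "\<phi> i \<in> J" using KJ by auto
                then show ?thesis using True bbc Inl by (auto simp: S2_def bb_def)
              next
                case False
                then have "setdist_e d (bb \<tau>) A = 0" using zA[of i] iI Inl sd_in[OF md] by (simp add: bb_def)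
                then show ?thesis using bbc c0 by simp
              qed
            qed
          next
            case (Inr j)
            then have jJ: "j \<in> J" using \<tau>T by (auto simp: T_def)
            have "setdist_e d (aa \<tau>) A = 0" using raaInr \<tau>T Inr by simp
            then have "ennreal c \<le> setdist_e d (y j) A" using nb Inr c0 by (auto simp: bb_def not_le)
            then show ?thesis using jJ Inr by (auto simp: S3_def)
          qed
        qed
        have f1: "finite S1" unfolding S1_def by (rule finite_imageI, rule Dbar_fin[OF mp p a c0])
        have f3: "finite S3" unfolding S3_def by (rule finite_imageI, rule Dbar_fin[OF mp p b c0])
        have f2: "finite S2" unfolding S2_def
          by (rule finite_imageI, rule finite_vimage_IntI[OF Dbar_fin[OF mp p b c0] inj])
        show ?thesis using sub f1 f2 f3 by (meson finite_Un finite_subset)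
      qed
      have "finite (fst (u_part d A \<delta> (mid t)))" if \<delta>: "\<delta> > 0" for \<delta>
      proof -
        define \<delta>' where "\<delta>' = (if \<delta> = \<infinity> then 1 else enn2real \<delta>)"
        have \<delta>'0: "\<delta>' > 0" using \<delta> by (auto simp: \<delta>'_def enn2real_positive_iff less_top)
        have \<delta>'le: "ennreal \<delta>' \<le> \<delta>" using \<delta> by (cases "\<delta> = \<infinity>") (auto simp: \<delta>'_def less_top)
        have "fst (u_part d A \<delta> (mid t)) \<subseteq> enc ` {\<tau>\<in>T. ennreal \<delta>' \<le> setdist_e d (H \<tau> t) A}"
        proof
          fix n assume "n \<in> fst (u_part d A \<delta> (mid t))"
          then obtain \<tau> where \<tau>: "\<tau> \<in> T" "n = enc \<tau>" "\<not> setdist_e d (H \<tau> t) A < \<delta>"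
            by (auto simp: u_part_def mid_def thick_def decenc)
          then have "ennreal \<delta>' \<le> setdist_e d (H \<tau> t) A" using \<delta>'le by (simp add: not_less order_trans)
          then show "n \<in> enc ` {\<tau>\<in>T. ennreal \<delta>' \<le> setdist_e d (H \<tau> t) A}" using \<tau> by auto
        qed
        then show ?thesis using fin'[OF \<delta>'0] finite_subset by blast
      qed
      then show ?thesis using True midfs by (simp add: Dbar_def)
    next
      case False
      have q: "real_of_ereal p \<ge> 1" using realp_pos p False by auto
      define q' where "q' = real_of_ereal p"
      have ua: "finite (fst (u_part d A \<infinity> (I,x)))" and wl: "Wp d A p (l_part d A \<infinity> (I,x)) fzero < \<infinity>"
        using a False by (auto simp: Dbar_def)
      have u: "finite (fst (u_part d A \<infinity> (mid t)))"
      proof -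
        have "fst (u_part d A \<infinity> (mid t)) \<subseteq> enc ` Inl ` fst (u_part d A \<infinity> (I,x))"
        proof
          fix n assume "n \<in> fst (u_part d A \<infinity> (mid t))"
          then obtain \<tau> where \<tau>: "\<tau> \<in> T" "n = enc \<tau>" "\<not> setdist_e d (H \<tau> t) A < \<infinity>"
            by (auto simp: u_part_def mid_def thick_def decenc)
          have "setdist_e d (H \<tau> t) A = \<infinity>" using \<tau>(3) by (simp add: not_less top_unique)
          then have "\<infinity> \<le> setdist_e d (aa \<tau>) A + L \<tau>" using rb[OF \<tau>(1) tt] by simp
          then have "setdist_e d (aa \<tau>) A + L \<tau> = \<infinity>" by (simp add: top_unique)
          then have ai: "setdist_e d (aa \<tau>) A = \<infinity>" using Lfin[OF \<tau>(1)] by (auto simp: ennreal_add_eq_top)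
          show "n \<in> enc ` Inl ` fst (u_part d A \<infinity> (I,x))"
          proof (cases \<tau>)
            case (Inl i)
            then show ?thesis using \<tau> ai by (auto simp: u_part_def thick_def aa_def T_def)
          next
            case (Inr j)
            then show ?thesis using raaInr \<tau>(1) ai by simp
          qed
        qed
        then show ?thesis using ua by (meson finite_imageI finite_subset)
      qed
      define T' where "T' = {\<tau>\<in>T. H \<tau> t \<notin> A \<and> setdist_e d (H \<tau> t) A < \<infinity>}"
      have lp: "l_part d A \<infinity> (mid t) = (enc ` T', \<lambda>n. H (dec n) t)"
        by (auto simp: l_part_def mid_def T'_def thick_def decenc)
      have r1: "rep A T' (l_part d A \<infinity> (mid t)) (\<lambda>\<tau>. H \<tau> t) (\<lambda>\<tau>. Some (enc \<tau>))"
        unfolding lp rep_def using decenc encinj by auto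
      have nearT: "near d A (H \<tau> t) \<in> A \<and> d (H \<tau> t) (near d A (H \<tau> t)) = setdist_e d (H \<tau> t) A" if "\<tau> \<in> T'" for \<tau>
        by (rule near[OF dm]) (use that in \<open>simp add: T'_def\<close>)
      have r2: "rep A T' ({}, \<lambda>_. undefined) (\<lambda>\<tau>. near d A (H \<tau> t)) (\<lambda>_. None)"
        using rep_fzero[of T' "\<lambda>\<tau>. near d A (H \<tau> t)" A] nearT by (simp add: fzero_def)
      have "Wp d A p (l_part d A \<infinity> (mid t)) fzero = Wp d A p (fst (l_part d A \<infinity> (mid t)), snd (l_part d A \<infinity> (mid t))) ({}, \<lambda>_. undefined)"
        by (simp add: fzero_def)
      also have "\<dots> \<le> Np p (\<lambda>\<tau>. d (H \<tau> t) (near d A (H \<tau> t))) T'"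
        by (rule key[OF p _ r2]) (use r1 in simp)
      also have "\<dots> = Np p (\<lambda>\<tau>. setdist_e d (H \<tau> t) A) T'" by (rule N_cong) (use nearT in blast)
      also have "\<dots> < \<infinity>"
      proof -
        define LI where "LI = {i\<in>I. x i \<in> thick d A \<infinity> - A}"
        have lpa: "l_part d A \<infinity> (I,x) = (LI, x)" by (simp add: l_part_def LI_def)
        have "Np p (\<lambda>i. setdist_e d (x i) A) LI < \<infinity>" using lower_fzero[OF p md, of x A LI] wl lpa by simp
        then have sLI: "infsum (\<lambda>i. enn_powr (setdist_e d (x i) A) q') LI < \<infinity>"
          using N_lt_top_inf[OF p False] by (simp add: q'_def)
        have sL: "infsum (\<lambda>\<tau>. enn_powr (L \<tau>) q') T < \<infinity>"
          using N_lt_top_inf[OF p False, of L T] NL Wf by (simp add: q'_def)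
        have bnd: "enn_powr (setdist_e d (H \<tau> t) A) q' \<le> ennreal (2 powr q') * (enn_powr (setdist_e d (aa \<tau>) A) q' + enn_powr (L \<tau>) q')"
          if "\<tau> \<in> T'" for \<tau>
        proof -
          have "\<tau> \<in> T" using that by (simp add: T'_def)
          then have "enn_powr (setdist_e d (H \<tau> t) A) q' \<le> enn_powr (setdist_e d (aa \<tau>) A + L \<tau>) q'"
            using rb tt q by (intro ep_mono) (auto simp: q'_def)
          also have "\<dots> \<le> ennreal (2 powr q') * (enn_powr (setdist_e d (aa \<tau>) A) q' + enn_powr (L \<tau>) q')"
            using q by (intro powbound) (simp add: q'_def)
          finally show ?thesis .
        qed
        have T'sub: "T' \<subseteq> Inl ` LI \<union> Inr ` (J - \<phi> ` K)"
        proof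
          fix \<tau> assume \<tau>: "\<tau> \<in> T'"
          then have \<tau>T: "\<tau> \<in> T" by (simp add: T'_def)
          show "\<tau> \<in> Inl ` LI \<union> Inr ` (J - \<phi> ` K)"
          proof (cases \<tau>)
            case (Inl i)
            then have iI: "i \<in> I" using \<tau>T by (auto simp: T_def)
            have "setdist_e d (x i) A \<le> d (x i) (H \<tau> t) + setdist_e d (H \<tau> t) A" by (rule sd_tri[OF md])
            also have "d (x i) (H \<tau> t) = ennreal t * L \<tau>"
              using dH[OF \<tau>T _ tt, of 0] H0[OF \<tau>T] Inl tt by (simp add: aa_def)
            finally have le: "setdist_e d (x i) A \<le> ennreal t * L \<tau> + setdist_e d (H \<tau> t) A" .
            have "ennreal t * L \<tau> + setdist_e d (H \<tau> t) A < \<infinity>" using \<tau> Lfin[OF \<tau>T]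
              by (simp add: T'_def ennreal_mult_less_top ennreal_add_less_top)
            then have "setdist_e d (x i) A < \<infinity>" using le by (rule le_less_trans[rotated])
            then show ?thesis using Inl iI fsx[OF iI] by (auto simp: LI_def thick_def)
          next
            case (Inr j)
            then show ?thesis using \<tau>T by (auto simp: T_def)
          qed
        qed
        have "infsum (\<lambda>\<tau>. enn_powr (setdist_e d (aa \<tau>) A) q') T' \<le> infsum (\<lambda>\<tau>. enn_powr (setdist_e d (aa \<tau>) A) q') (Inl ` LI \<union> Inr ` (J - \<phi> ` K))"
          by (rule infsum_subset_enn[OF T'sub])
        also have "\<dots> = infsum (\<lambda>\<tau>. enn_powr (setdist_e d (aa \<tau>) A) q') (Inl ` LI) + infsum (\<lambda>\<tau>. enn_powr (setdist_e d (aa \<tau>) A) q') (Inr ` (J - \<phi> ` K))"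
          by (rule infsum_Un_disjoint) auto
        also have "infsum (\<lambda>\<tau>. enn_powr (setdist_e d (aa \<tau>) A) q') (Inr ` (J - \<phi> ` K)) = 0"
          by (rule infsum_0) (auto simp: aa_def sd_in[OF md] wA)
        also have "infsum (\<lambda>\<tau>. enn_powr (setdist_e d (aa \<tau>) A) q') (Inl ` LI) = infsum (\<lambda>i. enn_powr (setdist_e d (x i) A) q') LI"
          by (simp add: infsum_reindex o_def aa_def)
        finally have sA: "infsum (\<lambda>\<tau>. enn_powr (setdist_e d (aa \<tau>) A) q') T' < \<infinity>" using sLI by simp
        have sL': "infsum (\<lambda>\<tau>. enn_powr (L \<tau>) q') T' < \<infinity>"
          using infsum_subset_enn[of T' T "\<lambda>\<tau>. enn_powr (L \<tau>) q'"] sL by (auto simp: T'_def)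
        have "infsum (\<lambda>\<tau>. enn_powr (setdist_e d (H \<tau> t) A) q') T' \<le> infsum (\<lambda>\<tau>. ennreal (2 powr q') * (enn_powr (setdist_e d (aa \<tau>) A) q' + enn_powr (L \<tau>) q')) T'"
          using bnd by (intro infsum_mono) auto
        also have "\<dots> = ennreal (2 powr q') * (infsum (\<lambda>\<tau>. enn_powr (setdist_e d (aa \<tau>) A) q') T' + infsum (\<lambda>\<tau>. enn_powr (L \<tau>) q') T')"
          by (simp add: infsum_cmult_enn infsum_add)
        also have "\<dots> < \<infinity>" using sA sL' by (simp add: ennreal_mult_less_top less_top)
        finally have "infsum (\<lambda>\<tau>. enn_powr (setdist_e d (H \<tau> t) A) q') T' < \<infinity>" .
        then show ?thesis using False q ep_top_iff[of "1 / q'"] by (simp add: Np_def q'_def less_top[symmetric])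
      qed
      finally have "Wp d A p (l_part d A \<infinity> (mid t)) fzero < \<infinity>" .
      then show ?thesis using False midfs u by (simp add: Dbar_def)
    qed
    show ?thesis
    proof (cases "t = 0 \<or> t = 1")
      case True then show ?thesis using a b by (auto simp: \<gamma>_def)
    next
      case False then show ?thesis using midD[OF that] by (simp add: \<gamma>_def)
    qed
  qed

  have membf: "\<gamma> t \<in> Dfin A" if "t \<in> {0..1}" "finite I" "finite J" for t
  proof -
    have fT: "finite T" using that(2,3) by (simp add: T_def)
    show ?thesis
    proof (cases "t = 0 \<or> t = 1")
      case True then show ?thesis using fsa fsb that(2,3) by (auto simp: \<gamma>_def Dfin_def)
    next
      case False
      have "mid t \<in> fsums A" using decenc by (auto simp: mid_def fsums_def)
      moreover have "finite (fst (mid t))" using fT by (simp add: mid_def)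
      ultimately show ?thesis using False by (simp add: \<gamma>_def Dfin_def)
    qed
  qed

  have g0: "\<gamma> 0 = (I,x)" and g1: "\<gamma> 1 = (J,y)" by (auto simp: \<gamma>_def)
  have pc: "path_cont (Wp d A p) \<gamma>" by (rule path_cont_lip[where D="Wp d A p" and \<gamma>=\<gamma>, OF Wf lip])
  have "path_length (Wp d A p) \<gamma> \<le> W" by (rule path_length_le[where D="Wp d A p" and \<gamma>=\<gamma>, OF lip])
  moreover have "Wp d A p (\<gamma> 0) (\<gamma> 1) \<le> path_length (Wp d A p) \<gamma>" by (rule path_length_ge)
  ultimately have pl: "path_length (Wp d A p) \<gamma> = W" using g0 g1 by (simp add: W_def)
  show ?thesis
    by (rule exI[of _ \<gamma>]) (use memb membf g0 g1 pc pl in \<open>auto simp: W_def\<close>)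
qed

theorem theorem5p9:
  fixes d :: "'a \<Rightarrow> 'a \<Rightarrow> ennreal" and A :: "'a set" and p :: ereal
  assumes "metric_pair d A"
    and "geodesic_space UNIV d"
    and "dist_minimizing d A"
    and "1 \<le> p"
  shows "geodesic_space (Dbar d A p) (Wp d A p) \<and> geodesic_space (Dfin A) (Wp d A p)"
proof
  note mp = assms(1) and gs = assms(2) and dm = assms(3) and p = assms(4)
  show "geodesic_space (Dbar d A p) (Wp d A p)"
    unfolding geodesic_space_def
  proof (intro ballI impI)
    fix \<alpha> \<beta> assume a: "\<alpha> \<in> Dbar d A p" and b: "\<beta> \<in> Dbar d A p" and W: "Wp d A p \<alpha> \<beta> < \<infinity>"
    obtain I x where ax: "\<alpha> = (I,x)" by (cases \<alpha>)
    obtain J y where bj: "\<beta> = (J,y)" by (cases \<beta>)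
    have a': "(I,x) \<in> Dbar d A p" using a ax by simp
    have b': "(J,y) \<in> Dbar d A p" using b bj by simp
    have W': "Wp d A p (I,x) (J,y) < \<infinity>" using W ax bj by simp
    have "\<exists>\<gamma>. \<gamma> ` {0..1} \<subseteq> Dbar d A p \<and> \<gamma> 0 = (I,x) \<and> \<gamma> 1 = (J,y) \<and> path_cont (Wp d A p) \<gamma>
     \<and> path_length (Wp d A p) \<gamma> = Wp d A p (I,x) (J,y) \<and> (finite I \<longrightarrow> finite J \<longrightarrow> \<gamma> ` {0..1} \<subseteq> Dfin A)"
      by (rule path_exists[OF mp dm gs p a' b' W'])
    then obtain \<gamma> where h: "\<gamma> ` {0..1} \<subseteq> Dbar d A p \<and> \<gamma> 0 = (I,x) \<and> \<gamma> 1 = (J,y) \<and> path_cont (Wp d A p) \<gamma>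
     \<and> path_length (Wp d A p) \<gamma> = Wp d A p (I,x) (J,y) \<and> (finite I \<longrightarrow> finite J \<longrightarrow> \<gamma> ` {0..1} \<subseteq> Dfin A)" ..
    then have "\<gamma> ` {0..1} \<subseteq> Dbar d A p \<and> \<gamma> 0 = \<alpha> \<and> \<gamma> 1 = \<beta> \<and> path_cont (Wp d A p) \<gamma> \<and> path_length (Wp d A p) \<gamma> = Wp d A p \<alpha> \<beta>"
      unfolding ax bj by simp
    then show "\<exists>\<gamma>::real \<Rightarrow> 'a fsum. \<gamma> ` {0..1} \<subseteq> Dbar d A p \<and> \<gamma> 0 = \<alpha> \<and> \<gamma> 1 = \<beta> \<and> path_cont (Wp d A p) \<gamma> \<and> path_length (Wp d A p) \<gamma> = Wp d A p \<alpha> \<beta>"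
      by (rule exI[of _ \<gamma>])
  qed
  show "geodesic_space (Dfin A) (Wp d A p)"
    unfolding geodesic_space_def
  proof (intro ballI impI)
    fix \<alpha> \<beta> assume a: "\<alpha> \<in> Dfin A" and b: "\<beta> \<in> Dfin A" and W: "Wp d A p \<alpha> \<beta> < \<infinity>"
    obtain I x where ax: "\<alpha> = (I,x)" by (cases \<alpha>)
    obtain J y where bj: "\<beta> = (J,y)" by (cases \<beta>)
    have fI: "finite I" using a ax by (simp add: Dfin_def)
    have fJ: "finite J" using b bj by (simp add: Dfin_def)
    have a': "(I,x) \<in> Dbar d A p" using Dfin_Dbar[OF mp dm p a] ax by simp
    have b': "(J,y) \<in> Dbar d A p" using Dfin_Dbar[OF mp dm p b] bj by simp
    have W': "Wp d A p (I,x) (J,y) < \<infinity>" using W ax bj by simp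
    have "\<exists>\<gamma>. \<gamma> ` {0..1} \<subseteq> Dbar d A p \<and> \<gamma> 0 = (I,x) \<and> \<gamma> 1 = (J,y) \<and> path_cont (Wp d A p) \<gamma>
     \<and> path_length (Wp d A p) \<gamma> = Wp d A p (I,x) (J,y) \<and> (finite I \<longrightarrow> finite J \<longrightarrow> \<gamma> ` {0..1} \<subseteq> Dfin A)"
      by (rule path_exists[OF mp dm gs p a' b' W'])
    then obtain \<gamma> where h: "\<gamma> ` {0..1} \<subseteq> Dbar d A p \<and> \<gamma> 0 = (I,x) \<and> \<gamma> 1 = (J,y) \<and> path_cont (Wp d A p) \<gamma>
     \<and> path_length (Wp d A p) \<gamma> = Wp d A p (I,x) (J,y) \<and> (finite I \<longrightarrow> finite J \<longrightarrow> \<gamma> ` {0..1} \<subseteq> Dfin A)" ..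
    then have "\<gamma> ` {0..1} \<subseteq> Dfin A \<and> \<gamma> 0 = \<alpha> \<and> \<gamma> 1 = \<beta> \<and> path_cont (Wp d A p) \<gamma> \<and> path_length (Wp d A p) \<gamma> = Wp d A p \<alpha> \<beta>"
      unfolding ax bj using fI fJ by simp
    then show "\<exists>\<gamma>::real \<Rightarrow> 'a fsum. \<gamma> ` {0..1} \<subseteq> Dfin A \<and> \<gamma> 0 = \<alpha> \<and> \<gamma> 1 = \<beta> \<and> path_cont (Wp d A p) \<gamma> \<and> path_length (Wp d A p) \<gamma> = Wp d A p \<alpha> \<beta>"
      by (rule exI[of _ \<gamma>])
  qed
qed

end
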